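(* Let $\mathcal{G}$ be a 2-player finite game, let $y(t)$ solve $\dot y_k=v_k(Q(y))$, $k=1,2$, and let $x(t)=Q(y(t))$. Then the $\omega$-limit set of the time average $\bar x(t)=t^{-1}\int_0^tx(s)\,ds$ is internally chain transitive under the best response dynamics $\dot x_k\in\mathtt{br}_k(x)-x_k$, $k=1,2$.
   Context: Setting: finite game with players $\{1,2\}$, action sets $\mathcal{A}_k$, mixed strategies $\mathcal{X}_k=\Delta(\mathcal{A}_k)$, $\mathcal{X}=\mathcal{X}_1\times\mathcal{X}_2$, bilinear expected payoffs $u_k$, payoff vectors $v_k(x)=(u_k(\alpha;x_{-k}))_{\alpha\in\mathcal{A}_k}$. Each player has a penalty function $h_k$ on $\mathcal{X}_k$ (continuous, $C^\infty$ on relative interiors of faces, strongly convex: $h(tx_1+(1-t)x_2)\le th(x_1)+(1-t)h(x_2)-\tfrac12Kt(1-t)\|x_1-x_2\|^2$, $K>0$), with choice map $Q_k(y_k)=\arg\max_{x_k\in\mathcal{X}_k}\{\langle y_k,x_k\rangle-h_k(x_k)\}$. The best response correspondence is $\mathtt{br}_k(x)=\arg\max_{x_k'\in\mathcal{X}_k}\langle v_k(x),x_k'\rangle$. A compact set $L\subseteq\mathcal{X}$ is internally chain transitive for a differential inclusion if for all $x,z\in L$, $\varepsilon>0$, $T>0$ there exist $n\ge1$, solutions $z_1,\dots,z_n$ of the inclusion and times $t_1,\dots,t_n\ge T$ with $z_i([0,t_i])\subseteq L$, $\|z_i(t_i)-z_{i+1}(0)\|\le\varepsilon$ for $i<n$,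 $\|z_1(0)-x\|\le\varepsilon$ and $\|z_n(t_n)-z\|\le\varepsilon$. *)

theory Defs
  imports "HOL-Analysis.Analysis"
begin

definition mixed_strats :: "(real^'a::finite) set" where
  "mixed_strats = {x. (\<forall>i. 0 \<le> x$i) \<and> (\<Sum>i\<in>UNIV. x$i) = 1}"

text \<open>C-infinity on an open set U: there is a family D of iterated partial derivatives
  (D [] = f) such that each D ds is continuous and Frechet differentiable on U with
  partial derivatives D (b # ds), b in Basis.\<close>
definition smooth_on :: "'v::euclidean_space set \<Rightarrow> ('v \<Rightarrow> real) \<Rightarrow> bool" where
  "smooth_on U f \<longleftrightarrow> (\<exists>D :: 'v list \<Rightarrow> 'v \<Rightarrow> real.
      (\<forall>x\<in>U. D [] x = f x) \<and>
      (\<forall>ds. continuous_on U (D ds) \<and>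
         (\<forall>x\<in>U. (D ds has_derivative (\<lambda>h. \<Sum>b\<in>Basis. (h \<bullet> b) * D (b # ds) x)) (at x))))"

text \<open>Penalty function: continuous on the mixed_strats, smooth on the relative interior
  of every face (relative to the face's affine hull, expressed via a smooth extension
  to an open neighbourhood), and strongly convex with modulus K > 0.\<close>
definition penalty :: "(real^'a::finite \<Rightarrow> real) \<Rightarrow> bool" where
  "penalty h \<longleftrightarrow> continuous_on mixed_strats h \<and>
     (\<forall>F. F face_of mixed_strats \<longrightarrow>
        (\<exists>U g. open U \<and> rel_interior F \<subseteq> U \<and> smooth_on U g \<and>
               (\<forall>x\<in>rel_interior F. g x = h x))) \<and>
     (\<exists>K>0. \<forall>x1\<in>mixed_strats. \<forall>x2\<in>mixed_strats. \<forall>t\<in>{0..1::real}.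
        h (t *\<^sub>R x1 + (1 - t) *\<^sub>R x2) \<le> t * h x1 + (1 - t) * h x2
           - 1/2 * K * t * (1 - t) * (norm (x1 - x2))\<^sup>2)"

definition choice :: "(real^'a::finite \<Rightarrow> real) \<Rightarrow> real^'a \<Rightarrow> real^'a" where
  "choice h y = (THE x. x \<in> mixed_strats \<and> (\<forall>x'\<in>mixed_strats. y \<bullet> x' - h x' \<le> y \<bullet> x - h x))"

definition payvec1 :: "('a::finite \<Rightarrow> 'b::finite \<Rightarrow> real) \<Rightarrow> real^'b \<Rightarrow> real^'a" where
  "payvec1 A x2 = (\<chi> a. \<Sum>b\<in>UNIV. A a b * x2$b)"

definition payvec2 :: "('a::finite \<Rightarrow> 'b::finite \<Rightarrow> real) \<Rightarrow> real^'a \<Rightarrow> real^'b" where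
  "payvec2 B x1 = (\<chi> b. \<Sum>a\<in>UNIV. B a b * x1$a)"

definition best_resp :: "real^'a::finite \<Rightarrow> (real^'a) set" where
  "best_resp v = {p\<in>mixed_strats. \<forall>p'\<in>mixed_strats. v \<bullet> p' \<le> v \<bullet> p}"

definition br_field :: "('a::finite \<Rightarrow> 'b::finite \<Rightarrow> real) \<Rightarrow> ('a \<Rightarrow> 'b \<Rightarrow> real)
     \<Rightarrow> ((real^'a) \<times> (real^'b)) \<Rightarrow> ((real^'a) \<times> (real^'b)) set" where
  "br_field A B x = {(p1 - fst x, p2 - snd x) | p1 p2.
      p1 \<in> best_resp (payvec1 A (snd x)) \<and> p2 \<in> best_resp (payvec2 B (fst x))}"

text \<open>Solution of the differential inclusion z' \<in> F(z) on [0,t]: z is absolutely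
  continuous, i.e. z(s) = z(0) + integral of an absolutely integrable w over [0,s],
  and w(s) \<in> F(z(s)) for almost every s in [0,t].\<close>
definition incl_solution :: "('v::euclidean_space \<Rightarrow> 'v set) \<Rightarrow> (real \<Rightarrow> 'v) \<Rightarrow> real \<Rightarrow> bool" where
  "incl_solution F z t \<longleftrightarrow> 0 \<le> t \<and> (\<exists>w N. w absolutely_integrable_on {0..t} \<and>
      (\<forall>s\<in>{0..t}. (w has_integral (z s - z 0)) {0..s}) \<and>
      negligible N \<and> (\<forall>s\<in>{0..t} - N. w s \<in> F (z s)))"

definition internally_chain_transitive :: "('v::euclidean_space \<Rightarrow> 'v set) \<Rightarrow> 'v set \<Rightarrow> bool" where
  "internally_chain_transitive F L \<longleftrightarrow> compact L \<and>
     (\<forall>x\<in>L. \<forall>z\<in>L. \<forall>\<epsilon>>0. \<forall>T>0. \<exists>n\<ge>1. \<exists>zs :: nat \<Rightarrow> real \<Rightarrow> 'v. \<exists>ts :: nat \<Rightarrow> real.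
        (\<forall>i\<in>{1..n}. incl_solution F (zs i) (ts i) \<and> T \<le> ts i \<and> zs i ` {0..ts i} \<subseteq> L) \<and>
        (\<forall>i\<in>{1..<n}. norm (zs i (ts i) - zs (Suc i) 0) \<le> \<epsilon>) \<and>
        norm (zs 1 0 - x) \<le> \<epsilon> \<and> norm (zs n (ts n) - z) \<le> \<epsilon>)"

definition omega_limit :: "(real \<Rightarrow> 'v::real_normed_vector) \<Rightarrow> 'v set" where
  "omega_limit f = {p. \<exists>s :: nat \<Rightarrow> real. filterlim s at_top sequentially \<and>
                        (\<lambda>n. f (s n)) \<longlonglongrightarrow> p}"

end

theory Submission
  imports Defs "HOL-Complex_Analysis.Great_Picard"
begin


lemma ms_nonneg: "x \<in> mixed_strats \<Longrightarrow> 0 \<le> x $ i"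
  by (simp add: mixed_strats_def)

lemma ms_sum: "x \<in> mixed_strats \<Longrightarrow> (\<Sum>i\<in>UNIV. x $ i) = 1"
  by (simp add: mixed_strats_def)

lemma ms_le1: "x \<in> mixed_strats \<Longrightarrow> x $ i \<le> 1"
proof -
  assume x: "x \<in> mixed_strats"
  have "x $ i \<le> (\<Sum>j\<in>UNIV. x $ j)"
    by (rule member_le_sum) (auto simp: ms_nonneg[OF x])
  then show ?thesis using ms_sum[OF x] by simp
qed

lemma ms_norm: "x \<in> mixed_strats \<Longrightarrow> norm x \<le> 1"
proof -
  assume x: "x \<in> mixed_strats"
  have "norm x \<le> (\<Sum>i\<in>UNIV. \<bar>x $ i\<bar>)" by (rule norm_le_l1_cart)
  also have "\<dots> = (\<Sum>i\<in>UNIV. x $ i)" using ms_nonneg[OF x] by simp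
  finally show ?thesis using ms_sum[OF x] by simp
qed

lemma ms_closed: "closed (mixed_strats :: (real^'a::finite) set)"
proof -
  have "mixed_strats = (\<Inter>i. {x::real^'a. 0 \<le> x $ i}) \<inter> {x. (\<Sum>i\<in>UNIV. x $ i) = 1}"
    by (auto simp: mixed_strats_def)
  moreover have "closed {x::real^'a. (\<Sum>i\<in>UNIV. x $ i) = 1}"
    by (intro closed_Collect_eq continuous_intros)
  moreover have "closed {x::real^'a. 0 \<le> x $ i}" for i
    by (intro closed_Collect_le continuous_intros)
  ultimately show ?thesis by (metis closed_INT closed_Int)
qed

lemma ms_bounded: "bounded (mixed_strats :: (real^'a::finite) set)"
  unfolding bounded_iff using ms_norm by blast

lemma ms_compact: "compact (mixed_strats :: (real^'a::finite) set)"
  using ms_closed ms_bounded by (simp add: compact_eq_bounded_closed)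

lemma ms_convex: "convex (mixed_strats :: (real^'a::finite) set)"
  unfolding convex_def mixed_strats_def
  by (auto simp: sum.distrib sum_distrib_left[symmetric])

lemma ms_ne: "(\<chi> i. 1 / real CARD('a)) \<in> (mixed_strats :: (real^'a::finite) set)"
  by (simp add: mixed_strats_def)

lemma ms_nonempty: "(mixed_strats :: (real^'a::finite) set) \<noteq> {}"
  using ms_ne by blast

lemma penaltyD:
  assumes "penalty h"
  shows "continuous_on mixed_strats h"
    and "\<exists>K>0. \<forall>x1\<in>mixed_strats. \<forall>x2\<in>mixed_strats. \<forall>t\<in>{0..1::real}.
        h (t *\<^sub>R x1 + (1 - t) *\<^sub>R x2) \<le> t * h x1 + (1 - t) * h x2
           - 1/2 * K * t * (1 - t) * (norm (x1 - x2))\<^sup>2"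
  using assms unfolding penalty_def by auto

lemma choice_exists:
  fixes h :: "real^'a::finite \<Rightarrow> real"
  assumes "penalty h"
  shows "\<exists>x\<in>mixed_strats. \<forall>x'\<in>mixed_strats. y \<bullet> x' - h x' \<le> y \<bullet> x - h x"
proof -
  have "continuous_on mixed_strats (\<lambda>x. y \<bullet> x - h x)"
    using penaltyD(1)[OF assms] by (intro continuous_intros) auto
  then show ?thesis
    using continuous_attains_sup[OF ms_compact ms_nonempty] by blast
qed

lemma choice_unique:
  fixes h :: "real^'a::finite \<Rightarrow> real"
  assumes "penalty h"
    and x1: "x1 \<in> mixed_strats" "\<forall>x'\<in>mixed_strats. y \<bullet> x' - h x' \<le> y \<bullet> x1 - h x1"
    and x2: "x2 \<in> mixed_strats" "\<forall>x'\<in>mixed_strats. y \<bullet> x' - h x' \<le> y \<bullet> x2 - h x2"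
  shows "x1 = x2"
proof (rule ccontr)
  assume ne: "x1 \<noteq> x2"
  obtain K where K: "K > 0" and sc: "\<forall>x1\<in>mixed_strats. \<forall>x2\<in>mixed_strats. \<forall>t\<in>{0..1::real}.
        h (t *\<^sub>R x1 + (1 - t) *\<^sub>R x2) \<le> t * h x1 + (1 - t) * h x2
           - 1/2 * K * t * (1 - t) * (norm (x1 - x2))\<^sup>2"
    using penaltyD(2)[OF assms(1)] by blast
  define m where "m = (1/2::real) *\<^sub>R x1 + (1 - 1/2) *\<^sub>R x2"
  have m: "m \<in> mixed_strats" unfolding m_def
    using ms_convex x1(1) x2(1) by (rule convexD) auto
  have hm: "h m \<le> 1/2 * h x1 + 1/2 * h x2 - 1/8 * K * (norm (x1 - x2))\<^sup>2"
    using sc[rule_format, OF x1(1) x2(1), of "1/2"] unfolding m_def by simp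
  have ym: "y \<bullet> m = 1/2 * (y \<bullet> x1) + 1/2 * (y \<bullet> x2)"
    unfolding m_def by (simp add: inner_add_right)
  have "y \<bullet> m - h m \<le> y \<bullet> x1 - h x1" using x1(2) m by blast
  moreover have "y \<bullet> x2 - h x2 = y \<bullet> x1 - h x1"
    using x1 x2 by (meson order_antisym)
  moreover have "0 < (norm (x1 - x2))\<^sup>2" using ne by simp
  ultimately have "0 < K * (norm (x1 - x2))\<^sup>2" using K by simp
  then show False using hm ym \<open>y \<bullet> m - h m \<le> y \<bullet> x1 - h x1\<close>
    \<open>y \<bullet> x2 - h x2 = y \<bullet> x1 - h x1\<close> by linarith
qed

lemma choice_props:
  fixes h :: "real^'a::finite \<Rightarrow> real"
  assumes "penalty h"
  shows "choice h y \<in> mixed_strats"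
    and "\<And>x'. x' \<in> mixed_strats \<Longrightarrow> y \<bullet> x' - h x' \<le> y \<bullet> choice h y - h (choice h y)"
proof -
  obtain x where x: "x \<in> mixed_strats" "\<forall>x'\<in>mixed_strats. y \<bullet> x' - h x' \<le> y \<bullet> x - h x"
    using choice_exists[OF assms] by blast
  have "choice h y = x" unfolding choice_def
    by (rule the_equality) (use x choice_unique[OF assms] in blast)+
  then show "choice h y \<in> mixed_strats"
    and "\<And>x'. x' \<in> mixed_strats \<Longrightarrow> y \<bullet> x' - h x' \<le> y \<bullet> choice h y - h (choice h y)"
    using x by auto
qed

lemma choice_lipschitz:
  fixes h :: "real^'a::finite \<Rightarrow> real"
  assumes "penalty h"
  shows "\<exists>C>0. \<forall>y1 y2. norm (choice h y1 - choice h y2) \<le> C * norm (y1 - y2)"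
proof -
  obtain K where K: "K > 0" and sc: "\<forall>x1\<in>mixed_strats. \<forall>x2\<in>mixed_strats. \<forall>t\<in>{0..1::real}.
        h (t *\<^sub>R x1 + (1 - t) *\<^sub>R x2) \<le> t * h x1 + (1 - t) * h x2
           - 1/2 * K * t * (1 - t) * (norm (x1 - x2))\<^sup>2"
    using penaltyD(2)[OF assms(1)] by blast
  have key: "y \<bullet> q - h q - (y \<bullet> q' - h q') \<ge> K/4 * (norm (q - q'))\<^sup>2"
    if q: "q \<in> mixed_strats" "\<forall>x'\<in>mixed_strats. y \<bullet> x' - h x' \<le> y \<bullet> q - h q"
      and q': "q' \<in> mixed_strats" for y q q'
  proof -
    define m where "m = (1/2::real) *\<^sub>R q + (1 - 1/2) *\<^sub>R q'"
    have m: "m \<in> mixed_strats" unfolding m_def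
      using ms_convex q(1) q' by (rule convexD) auto
    have hm: "h m \<le> 1/2 * h q + 1/2 * h q' - 1/8 * K * (norm (q - q'))\<^sup>2"
      using sc[rule_format, OF q(1) q', of "1/2"] unfolding m_def by simp
    have ym: "y \<bullet> m = 1/2 * (y \<bullet> q) + 1/2 * (y \<bullet> q')"
      unfolding m_def by (simp add: inner_add_right)
    have "y \<bullet> m - h m \<le> y \<bullet> q - h q" using q(2) m by blast
    then show ?thesis using hm ym by linarith
  qed
  show ?thesis
  proof (intro exI[of _ "2/K"] conjI allI)
    show "0 < 2/K" using K by simp
    fix y1 y2
    let ?q1 = "choice h y1" and ?q2 = "choice h y2"
    have a: "y1 \<bullet> ?q1 - h ?q1 - (y1 \<bullet> ?q2 - h ?q2) \<ge> K/4 * (norm (?q1 - ?q2))\<^sup>2"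
      by (rule key) (use choice_props[OF assms] in auto)
    have b: "y2 \<bullet> ?q2 - h ?q2 - (y2 \<bullet> ?q1 - h ?q1) \<ge> K/4 * (norm (?q1 - ?q2))\<^sup>2"
      using key[of ?q2 y2 ?q1] choice_props[OF assms] by (simp add: norm_minus_commute)
    have "(y1 - y2) \<bullet> (?q1 - ?q2) = y1 \<bullet> ?q1 - y1 \<bullet> ?q2 - (y2 \<bullet> ?q1 - y2 \<bullet> ?q2)"
      by (simp add: inner_diff_left inner_diff_right)
    moreover have "norm (?q2 - ?q1) = norm (?q1 - ?q2)" by (rule norm_minus_commute)
    ultimately have c: "K/2 * (norm (?q1 - ?q2))\<^sup>2 \<le> (y1 - y2) \<bullet> (?q1 - ?q2)"
      using a b by linarith
    also have "\<dots> \<le> norm (y1 - y2) * norm (?q1 - ?q2)" by (rule norm_cauchy_schwarz)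
    finally have d: "K/2 * (norm (?q1 - ?q2))\<^sup>2 \<le> norm (y1 - y2) * norm (?q1 - ?q2)" .
    show "norm (?q1 - ?q2) \<le> 2 / K * norm (y1 - y2)"
    proof (cases "norm (?q1 - ?q2) = 0")
      case True then show ?thesis using K by simp
    next
      case False
      then have pos: "norm (?q1 - ?q2) > 0" by simp
      from d have "K/2 * norm (?q1 - ?q2) * norm (?q1 - ?q2) \<le> norm (y1 - y2) * norm (?q1 - ?q2)"
        by (simp add: power2_eq_square mult.assoc)
      then have "K/2 * norm (?q1 - ?q2) \<le> norm (y1 - y2)"
        using pos by (simp add: mult_le_cancel_right)
      then show ?thesis using K by (simp add: field_simps)
    qed
  qed
qed

lemma choice_continuous:
  fixes h :: "real^'a::finite \<Rightarrow> real"
  assumes "penalty h"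
  shows "continuous_on UNIV (choice h)"
proof -
  obtain C where C: "C > 0" "\<forall>y1 y2. norm (choice h y1 - choice h y2) \<le> C * norm (y1 - y2)"
    using choice_lipschitz[OF assms] by blast
  show ?thesis
    unfolding continuous_on_iff
  proof (intro ballI allI impI)
    fix x e :: real assume "0 < e"
    fix x :: "real^'a"
    show "\<exists>d>0. \<forall>x'\<in>UNIV. dist x' x < d \<longrightarrow> dist (choice h x') (choice h x) < e"
      using C \<open>0<e\<close>
      by (intro exI[of _ "e/C"]) (auto simp: dist_norm field_simps intro: le_less_trans)
  qed
qed

lemma penalty_bounded:
  fixes h :: "real^'a::finite \<Rightarrow> real"
  assumes "penalty h"
  shows "\<exists>M. \<forall>x\<in>mixed_strats. \<bar>h x\<bar> \<le> M"
proof -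
  have "compact (h ` mixed_strats)"
    using compact_continuous_image[OF penaltyD(1)[OF assms] ms_compact] .
  then show ?thesis
    by (auto dest!: compact_imp_bounded simp: bounded_real)
qed


lemma avg_in_ms:
  fixes f :: "real \<Rightarrow> real^'a::finite"
  assumes I: "(f has_integral I) {a..b}" and ab: "a < b"
    and fin: "\<And>s. s \<in> {a..b} \<Longrightarrow> f s \<in> mixed_strats"
  shows "(1 / (b - a)) *\<^sub>R I \<in> mixed_strats"
proof -
  have comp: "((\<lambda>s. f s $ i) has_integral I $ i) {a..b}" for i
    using has_integral_linear[OF I bounded_linear_vec_nth[of i]] by (simp add: o_def)
  have nn: "0 \<le> I $ i" for i
    by (rule has_integral_nonneg[OF comp]) (use fin ms_nonneg in auto)
  have "((\<lambda>s. \<Sum>i\<in>UNIV. f s $ i) has_integral (\<Sum>i\<in>UNIV. I $ i)) {a..b}"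
    by (rule has_integral_sum) (auto intro: comp)
  moreover have "((\<lambda>s. \<Sum>i\<in>UNIV. f s $ i) has_integral (b - a)) {a..b}"
  proof -
    have "((\<lambda>s. 1::real) has_integral (b - a)) {a..b}"
      using has_integral_const_real[of "1::real" a b] ab by simp
    then show ?thesis
      by (rule has_integral_spike_eq[where S="{}", THEN iffD1, rotated -1]) (use fin ms_sum in auto)
  qed
  ultimately have "(\<Sum>i\<in>UNIV. I $ i) = b - a" by (rule has_integral_unique)
  then show ?thesis using nn ab
    by (auto simp: mixed_strats_def sum_divide_distrib[symmetric])
qed

lemma payvec1_linear: "bounded_linear (payvec1 A)"
  unfolding linear_conv_bounded_linear[symmetric]
  by (rule linearI) (auto simp: payvec1_def vec_eq_iff sum.distrib algebra_simps sum_distrib_left)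

lemma payvec2_linear: "bounded_linear (payvec2 B)"
  unfolding linear_conv_bounded_linear[symmetric]
  by (rule linearI) (auto simp: payvec2_def vec_eq_iff sum.distrib algebra_simps sum_distrib_left)

lemma eps_br:
  fixes h :: "real^'a::finite \<Rightarrow> real"
  assumes h: "penalty h" and M: "\<forall>x\<in>mixed_strats. \<bar>h x\<bar> \<le> M"
    and t: "t > 0" and p: "p \<in> mixed_strats"
  shows "v \<bullet> p - v \<bullet> choice h (y0 + t *\<^sub>R v) \<le> (2 * norm y0 + 2 * M) / t"
proof -
  let ?q = "choice h (y0 + t *\<^sub>R v)"
  have q: "?q \<in> mixed_strats" using choice_props(1)[OF h] .
  have opt: "(y0 + t *\<^sub>R v) \<bullet> p - h p \<le> (y0 + t *\<^sub>R v) \<bullet> ?q - h ?q"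
    using choice_props(2)[OF h p] .
  have "t * (v \<bullet> p - v \<bullet> ?q) \<le> y0 \<bullet> ?q - y0 \<bullet> p + h p - h ?q"
    using opt by (simp add: inner_add_left algebra_simps)
  also have "\<dots> \<le> norm y0 * norm ?q + norm y0 * norm p + M + M"
  proof -
    have "y0 \<bullet> ?q \<le> norm y0 * norm ?q" by (rule norm_cauchy_schwarz)
    moreover have "- (y0 \<bullet> p) \<le> norm y0 * norm p"
      using norm_cauchy_schwarz[of "-y0" p] by simp
    moreover have "\<bar>h p\<bar> \<le> M" "\<bar>h ?q\<bar> \<le> M" using M p q by auto
    ultimately show ?thesis by linarith
  qed
  also have "\<dots> \<le> 2 * norm y0 + 2 * M"
    using ms_norm[OF p] ms_norm[OF q]
    by (smt (verit, best) mult_left_le norm_ge_zero)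
  finally show ?thesis using t by (simp add: field_simps)
qed

locale game =
  fixes A :: "'a::finite \<Rightarrow> 'b::finite \<Rightarrow> real" and B :: "'a \<Rightarrow> 'b \<Rightarrow> real"
    and h1 :: "real^'a \<Rightarrow> real" and h2 :: "real^'b \<Rightarrow> real"
    and y :: "real \<Rightarrow> (real^'a) \<times> (real^'b)"
  assumes h1: "penalty h1" and h2: "penalty h2"
    and ode: "\<forall>t\<ge>0. (y has_vector_derivative
               (payvec1 A (choice h2 (snd (y t))), payvec2 B (choice h1 (fst (y t)))))
               (at t within {0..})"
begin

definition xx :: "real \<Rightarrow> (real^'a) \<times> (real^'b)" where
  "xx t = (choice h1 (fst (y t)), choice h2 (snd (y t)))"

definition V :: "(real^'a) \<times> (real^'b) \<Rightarrow> (real^'a) \<times> (real^'b)" where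
  "V z = (payvec1 A (snd z), payvec2 B (fst z))"

definition u :: "real \<Rightarrow> (real^'a) \<times> (real^'b)" where
  "u t = (1 / t) *\<^sub>R integral {0..t} xx"

definition XX :: "((real^'a) \<times> (real^'b)) set" where
  "XX = mixed_strats \<times> mixed_strats"

lemma V_linear: "bounded_linear V"
proof -
  have "bounded_linear (\<lambda>z. (payvec1 A (snd z), payvec2 B (fst z)))"
    by (intro bounded_linear_Pair bounded_linear_compose[OF payvec1_linear bounded_linear_snd]
        bounded_linear_compose[OF payvec2_linear bounded_linear_fst])
  then show ?thesis unfolding V_def[abs_def] .
qed

lemma xx_in: "xx t \<in> XX"
  by (simp add: xx_def XX_def choice_props(1)[OF h1] choice_props(1)[OF h2])

lemma y_deriv: "t \<ge> 0 \<Longrightarrow> (y has_vector_derivative V (xx t)) (at t within {0..})"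
  using ode by (simp add: V_def xx_def)

lemma y_cont: "continuous_on {0..} y"
  unfolding continuous_on_eq_continuous_within
  using y_deriv has_vector_derivative_continuous by (metis atLeast_iff)

lemma xx_cont: "continuous_on {0..} xx"
proof -
  have c1: "continuous_on {0..} (\<lambda>t. choice h1 (fst (y t)))"
    by (rule continuous_on_compose2[OF choice_continuous[OF h1]])
       (auto intro!: continuous_intros y_cont)
  have c2: "continuous_on {0..} (\<lambda>t. choice h2 (snd (y t)))"
    by (rule continuous_on_compose2[OF choice_continuous[OF h2]])
       (auto intro!: continuous_intros y_cont)
  show ?thesis unfolding xx_def[abs_def] using c1 c2 by (intro continuous_on_Pair)
qed

lemma xx_int: "t \<ge> 0 \<Longrightarrow> (xx has_integral integral {0..t} xx) {0..t}"
  by (intro integrable_integral integrable_continuous_real continuous_on_subset[OF xx_cont]) auto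

lemma y_ftc: assumes "t \<ge> 0" shows "y t = y 0 + V (integral {0..t} xx)"
proof -
  have "((\<lambda>s. V (xx s)) has_integral (y t - y 0)) {0..t}"
    by (rule fundamental_theorem_of_calculus[OF assms])
       (auto intro: has_vector_derivative_within_subset[OF y_deriv])
  moreover have "((\<lambda>s. V (xx s)) has_integral V (integral {0..t} xx)) {0..t}"
    using has_integral_linear[OF xx_int[OF assms] V_linear] by (simp add: o_def)
  ultimately show ?thesis by (metis add.commute diff_add_cancel has_integral_unique)
qed

lemma y_u: assumes "t > 0" shows "y t = y 0 + t *\<^sub>R V (u t)"
proof -
  have "V (u t) = (1/t) *\<^sub>R V (integral {0..t} xx)"
    unfolding u_def using linear_scale[OF bounded_linear.linear[OF V_linear]] by simp
  then show ?thesis using y_ftc[of t] assms by simp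
qed

lemma u_in: assumes "t > 0" shows "u t \<in> XX"
proof -
  have I: "(xx has_integral integral {0..t} xx) {0..t}" using xx_int assms by simp
  have "((\<lambda>s. fst (xx s)) has_integral fst (integral {0..t} xx)) {0..t}"
    using has_integral_linear[OF I bounded_linear_fst] by (simp add: o_def)
  from avg_in_ms[OF this assms] have 1: "(1/t) *\<^sub>R fst (integral {0..t} xx) \<in> mixed_strats"
    using xx_in by (auto simp: XX_def mem_Times_iff)
  have "((\<lambda>s. snd (xx s)) has_integral snd (integral {0..t} xx)) {0..t}"
    using has_integral_linear[OF I bounded_linear_snd] by (simp add: o_def)
  from avg_in_ms[OF this assms] have 2: "(1/t) *\<^sub>R snd (integral {0..t} xx) \<in> mixed_strats"
    using xx_in by (auto simp: XX_def mem_Times_iff)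
  show ?thesis using 1 2 by (simp add: u_def XX_def mem_Times_iff)
qed

end


lemma omega_char:
  fixes f :: "real \<Rightarrow> 'v::real_normed_vector"
  shows "p \<in> omega_limit f \<longleftrightarrow> (\<forall>T e. e > 0 \<longrightarrow> (\<exists>t\<ge>T. dist (f t) p < e))"
proof
  assume "p \<in> omega_limit f"
  then obtain s :: "nat \<Rightarrow> real" where s: "filterlim s at_top sequentially" "(\<lambda>n. f (s n)) \<longlonglongrightarrow> p"
    unfolding omega_limit_def by blast
  show "\<forall>T e. e > 0 \<longrightarrow> (\<exists>t\<ge>T. dist (f t) p < e)"
  proof (intro allI impI)
    fix T e :: real assume e: "e > 0"
    have "eventually (\<lambda>n. s n \<ge> T) sequentially"
      using s(1) by (simp add: filterlim_at_top)
    moreover have "eventually (\<lambda>n. dist (f (s n)) p < e) sequentially"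
      using s(2) e by (rule tendstoD)
    ultimately have "eventually (\<lambda>n. s n \<ge> T \<and> dist (f (s n)) p < e) sequentially"
      by (rule eventually_conj)
    then obtain N where "\<forall>n\<ge>N. s n \<ge> T \<and> dist (f (s n)) p < e"
      unfolding eventually_sequentially by blast
    then have "s N \<ge> T \<and> dist (f (s N)) p < e" by blast
    then show "\<exists>t\<ge>T. dist (f t) p < e" by blast
  qed
next
  assume H: "\<forall>T e. e > 0 \<longrightarrow> (\<exists>t\<ge>T. dist (f t) p < e)"
  have "\<forall>n::nat. \<exists>t. t \<ge> real n \<and> dist (f t) p < 1 / (real n + 1)"
  proof
    fix n :: nat
    have "1 / (real n + 1) > 0" by simp
    then show "\<exists>t. t \<ge> real n \<and> dist (f t) p < 1 / (real n + 1)" using H by blast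
  qed
  then obtain s where s0: "\<forall>n. s n \<ge> real n \<and> dist (f (s n)) p < 1 / (real n + 1)"
    by (rule choice[THEN exE])
  then have s: "\<And>n. s n \<ge> real n" "\<And>n. dist (f (s n)) p < 1 / (real n + 1)" by auto
  have "filterlim s at_top sequentially"
    by (rule filterlim_at_top_mono[OF filterlim_real_sequentially]) (simp add: s(1))
  moreover have "(\<lambda>n. f (s n)) \<longlonglongrightarrow> p"
  proof (rule tendstoI)
    fix e :: real assume e: "e > 0"
    obtain N :: nat where N: "1 / e < real N" using reals_Archimedean2 by blast
    have "dist (f (s n)) p < e" if "n \<ge> N" for n
    proof -
      have "1 / e < real n + 1" using N that by linarith
      then have "1 < e * (real n + 1)" using e by (simp add: field_simps)
      then have "1 / (real n + 1) < e" by (simp add: field_simps)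
      then show ?thesis using s(2)[of n] by linarith
    qed
    then show "eventually (\<lambda>n. dist (f (s n)) p < e) sequentially"
      by (auto simp: eventually_sequentially)
  qed
  ultimately show "p \<in> omega_limit f" unfolding omega_limit_def by blast
qed

lemma omega_eq_Inter:
  fixes f :: "real \<Rightarrow> 'v::real_normed_vector"
  shows "omega_limit f = (\<Inter>T. closure (f ` {T..}))"
  unfolding set_eq_iff omega_char by (auto simp: closure_approachable)

lemma omega_closed: "closed (omega_limit f)"
  unfolding omega_eq_Inter by (intro closed_INT) auto

context game begin

definition UU :: "real \<Rightarrow> (real^'a) \<times> (real^'b)" where
  "UU s = u (exp s)"

definition xi :: "real \<Rightarrow> (real^'a) \<times> (real^'b)" where
  "xi s = xx (exp s)"

lemma XX_norm: "z \<in> XX \<Longrightarrow> norm z \<le> 2"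
  using norm_Pair_le[of "fst z" "snd z"] ms_norm[of "fst z"] ms_norm[of "snd z"]
  by (auto simp: XX_def mem_Times_iff)

lemma XX_compact: "compact XX"
  unfolding XX_def by (intro compact_Times ms_compact)

lemma UU_in: "UU s \<in> XX" unfolding UU_def using u_in by simp
lemma xi_in: "xi s \<in> XX" unfolding xi_def using xx_in by simp

lemma I_deriv:
  assumes "t > 0"
  shows "((\<lambda>t. integral {0..t} xx) has_vector_derivative xx t) (at t)"
proof -
  have "((\<lambda>t. integral {0..t} xx) has_vector_derivative xx t) (at t within {0..t+1})"
    by (rule integral_has_vector_derivative) (use assms continuous_on_subset[OF xx_cont] in auto)
  then have "((\<lambda>t. integral {0..t} xx) has_vector_derivative xx t) (at t within {0<..<t+1})"
    by (rule has_vector_derivative_within_subset) auto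
  then show ?thesis
    by (subst (asm) has_vector_derivative_within_open) (use assms in auto)
qed

lemma u_deriv:
  assumes t: "t > 0"
  shows "(u has_vector_derivative (1/t) *\<^sub>R (xx t - u t)) (at t)"
proof -
  have d1: "((\<lambda>t. 1 / t) has_real_derivative - (1 / t^2)) (at t)"
    using t by (auto intro!: derivative_eq_intros simp: power2_eq_square field_simps)
  have "((\<lambda>t. (1/t) *\<^sub>R integral {0..t} xx) has_vector_derivative
          (1/t) *\<^sub>R xx t + (- (1/t^2)) *\<^sub>R integral {0..t} xx) (at t)"
    by (rule has_vector_derivative_scaleR[OF d1 I_deriv[OF t]])
  moreover have "(1/t) *\<^sub>R xx t + (- (1/t^2)) *\<^sub>R integral {0..t} xx = (1/t) *\<^sub>R (xx t - u t)"
    unfolding u_def by (simp add: algebra_simps power2_eq_square)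
  ultimately show ?thesis unfolding u_def[abs_def] by simp
qed

lemma UU_deriv: "(UU has_vector_derivative (xi s - UU s)) (at s)"
proof -
  have e: "(exp has_vector_derivative exp s) (at s)"
    using DERIV_exp has_real_derivative_iff_has_vector_derivative by blast
  have "(u has_vector_derivative (1/exp s) *\<^sub>R (xx (exp s) - u (exp s))) (at (exp s) within exp ` UNIV)"
    using u_deriv[of "exp s"] has_vector_derivative_at_within by auto
  from vector_diff_chain_within[OF e this]
  have "(u \<circ> exp has_vector_derivative exp s *\<^sub>R ((1/exp s) *\<^sub>R (xx (exp s) - u (exp s)))) (at s)"
    by simp
  then show ?thesis unfolding UU_def[abs_def] xi_def by (simp add: o_def)
qed

lemma UU_cont: "continuous_on S UU"
  using has_vector_derivative_continuous[OF UU_deriv] by (intro continuous_at_imp_continuous_on) simp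

lemma xi_cont: "continuous_on S xi"
proof -
  have "continuous_on UNIV (\<lambda>s. xx (exp s))"
    by (rule continuous_on_compose2[OF xx_cont continuous_on_exp[OF continuous_on_id]])
       (auto simp: less_imp_le)
  then show ?thesis unfolding xi_def[abs_def] by (rule continuous_on_subset) auto
qed

lemma UU_ftc: "a \<le> b \<Longrightarrow> ((\<lambda>s. xi s - UU s) has_integral (UU b - UU a)) {a..b}"
  by (rule fundamental_theorem_of_calculus) (auto intro: has_vector_derivative_at_within UU_deriv)

lemma UU_lip: "norm (UU b - UU a) \<le> 4 * \<bar>b - a\<bar>"
proof -
  have nb: "norm (xi s - UU s) \<le> 4" for s
  proof -
    have "norm (xi s - UU s) \<le> norm (xi s) + norm (UU s)" by (rule norm_triangle_ineq4)
    then show ?thesis using XX_norm[OF xi_in[of s]] XX_norm[OF UU_in[of s]] by linarith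
  qed
  have *: "norm (UU b - UU a) \<le> 4 * (b - a)" if "a \<le> b" for a b
  proof -
    have "norm (UU b - UU a) \<le> 4 * Henstock_Kurzweil_Integration.content {a..b}"
      by (rule has_integral_bound_real[where S="{}", OF _ _ UU_ftc[OF that]]) (use nb in auto)
    then show ?thesis using that by simp
  qed
  show ?thesis
  proof (cases "a \<le> b")
    case True then show ?thesis using *[OF True] by simp
  next
    case False then show ?thesis using *[of b a] by (simp add: norm_minus_commute)
  qed
qed

lemma eps_br1:
  "\<exists>C. \<forall>s. \<forall>p\<in>mixed_strats. payvec1 A (snd (UU s)) \<bullet> p - payvec1 A (snd (UU s)) \<bullet> fst (xi s)
       \<le> C * exp (- s)"
proof -
  obtain M where M: "\<forall>x\<in>mixed_strats. \<bar>h1 x\<bar> \<le> M" using penalty_bounded[OF h1] by blast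
  show ?thesis
  proof (intro exI allI ballI)
    fix s p assume p: "p \<in> (mixed_strats :: (real^'a) set)"
    have "fst (y (exp s)) = fst (y 0) + exp s *\<^sub>R payvec1 A (snd (UU s))"
      using y_u[of "exp s"] by (simp add: UU_def V_def)
    then have "fst (xi s) = choice h1 (fst (y 0) + exp s *\<^sub>R payvec1 A (snd (UU s)))"
      by (simp add: xi_def xx_def)
    have "payvec1 A (snd (UU s)) \<bullet> p - payvec1 A (snd (UU s)) \<bullet> fst (xi s) \<le> (2 * norm (fst (y 0)) + 2 * M) / exp s"
      using eps_br[OF h1 M exp_gt_zero[of s] p, of "payvec1 A (snd (UU s))" "fst (y 0)"] \<open>fst (xi s) = _\<close> by simp
    then show "payvec1 A (snd (UU s)) \<bullet> p - payvec1 A (snd (UU s)) \<bullet> fst (xi s)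
       \<le> (2 * norm (fst (y 0)) + 2 * M) * exp (- s)" by (simp add: exp_minus divide_inverse)
  qed
qed

lemma eps_br2:
  "\<exists>C. \<forall>s. \<forall>p\<in>mixed_strats. payvec2 B (fst (UU s)) \<bullet> p - payvec2 B (fst (UU s)) \<bullet> snd (xi s)
       \<le> C * exp (- s)"
proof -
  obtain M where M: "\<forall>x\<in>mixed_strats. \<bar>h2 x\<bar> \<le> M" using penalty_bounded[OF h2] by blast
  show ?thesis
  proof (intro exI allI ballI)
    fix s p assume p: "p \<in> (mixed_strats :: (real^'b) set)"
    have "snd (y (exp s)) = snd (y 0) + exp s *\<^sub>R payvec2 B (fst (UU s))"
      using y_u[of "exp s"] by (simp add: UU_def V_def)
    then have "snd (xi s) = choice h2 (snd (y 0) + exp s *\<^sub>R payvec2 B (fst (UU s)))"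
      by (simp add: xi_def xx_def)
    have "payvec2 B (fst (UU s)) \<bullet> p - payvec2 B (fst (UU s)) \<bullet> snd (xi s) \<le> (2 * norm (snd (y 0)) + 2 * M) / exp s"
      using eps_br[OF h2 M exp_gt_zero[of s] p, of "payvec2 B (fst (UU s))" "snd (y 0)"] \<open>snd (xi s) = _\<close> by simp
    then show "payvec2 B (fst (UU s)) \<bullet> p - payvec2 B (fst (UU s)) \<bullet> snd (xi s)
       \<le> (2 * norm (snd (y 0)) + 2 * M) * exp (- s)" by (simp add: exp_minus divide_inverse)
  qed
qed

abbreviation LL where "LL \<equiv> omega_limit u"

lemma LL_sub: "LL \<subseteq> XX"
proof
  fix p assume "p \<in> LL"
  then have "p \<in> closure (u ` {1..})" unfolding omega_eq_Inter by blast
  also have "\<dots> \<subseteq> closure XX"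
  proof (intro closure_mono)
    show "u ` {1..} \<subseteq> XX" using u_in by force
  qed
  also have "\<dots> = XX" using XX_compact by (simp add: compact_imp_closed)
  finally show "p \<in> XX" .
qed

lemma LL_compact: "compact LL"
  using compact_Int_closed[OF XX_compact omega_closed[of u]] LL_sub
  by (simp add: Int_absorb1)

lemma LL_approx_UU:
  assumes "p \<in> LL" "e > 0"
  shows "\<exists>s\<ge>S. dist (UU s) p < e"
proof -
  obtain t where t: "t \<ge> exp S" "dist (u t) p < e"
    using assms unfolding omega_char by blast
  have tp: "t > 0" using t(1) by (smt (verit) exp_gt_zero)
  show ?thesis
  proof (intro exI conjI)
    show "ln t \<ge> S" using t(1) tp by (metis exp_le_cancel_iff exp_ln)
    show "dist (UU (ln t)) p < e" using t tp by (simp add: UU_def)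
  qed
qed

lemma LL_lim:
  assumes s: "filterlim s at_top sequentially" and l: "(\<lambda>n. UU (s n + r)) \<longlonglongrightarrow> z"
  shows "z \<in> LL"
  unfolding omega_limit_def
proof (intro CollectI exI conjI)
  show "filterlim (\<lambda>n. exp (s n + r)) at_top sequentially"
  proof -
    have "filterlim (\<lambda>n. r + s n) at_top sequentially"
      by (rule filterlim_tendsto_add_at_top[OF tendsto_const s])
    then have "filterlim (\<lambda>n. s n + r) at_top sequentially" by (simp add: add.commute)
    then show ?thesis by (rule filterlim_compose[OF exp_at_top])
  qed
  show "(\<lambda>n. u (exp (s n + r))) \<longlonglongrightarrow> z" using l by (simp add: UU_def)
qed

end


lemma lip_cont_real:
  fixes F :: "real \<Rightarrow> real"
  assumes mono: "\<And>a b. a \<le> b \<Longrightarrow> F a \<le> F b" and lip: "\<And>a b. a \<le> b \<Longrightarrow> F b - F a \<le> b - a"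
  shows "continuous_on UNIV F"
  unfolding continuous_on_iff
proof (intro ballI allI impI)
  fix x e :: real assume e: "0 < e"
  have "dist (F x') (F x) < e" if "dist x' x < e" for x'
  proof (cases "x \<le> x'")
    case True then show ?thesis using mono[OF True] lip[OF True] that by (simp add: dist_real_def)
  next
    case False then have "x' \<le> x" by simp
    then show ?thesis using mono[OF \<open>x' \<le> x\<close>] lip[OF \<open>x' \<le> x\<close>] that by (simp add: dist_real_def)
  qed
  then show "\<exists>d>0. \<forall>x'\<in>UNIV. dist x' x < d \<longrightarrow> dist (F x') (F x) < e" using e by blast
qed

lemma sets_borel_Ioc: "sets (borel :: real measure) = sigma_sets UNIV (range (\<lambda>(a, b). {a<..b::real}))"
  by (subst borel_sigma_sets_Ioc) (simp add: sets_measure_of)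

lemma interval_measure_lip_ac:
  fixes F :: "real \<Rightarrow> real"
  assumes mono: "\<And>a b. a \<le> b \<Longrightarrow> F a \<le> F b" and lip: "\<And>a b. a \<le> b \<Longrightarrow> F b - F a \<le> b - a"
  shows "absolutely_continuous lborel (interval_measure F)"
proof -
  define G where "G x = x - F x" for x
  have monoG: "G a \<le> G b" if "a \<le> b" for a b using lip[OF that] by (simp add: G_def)
  have contF: "continuous_on UNIV F" by (rule lip_cont_real[OF mono lip])
  have contG: "continuous_on UNIV G" unfolding G_def[abs_def] using contF by (intro continuous_intros)
  have rcF: "continuous (at_right a) F" for a
    by (rule continuous_at_imp_continuous_within) (use contF in \<open>simp add: continuous_on_eq_continuous_at\<close>)
  have rcG: "continuous (at_right a) G" for a
    by (rule continuous_at_imp_continuous_within) (use contG in \<open>simp add: continuous_on_eq_continuous_at\<close>)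
  let ?\<mu> = "interval_measure F" and ?\<nu> = "interval_measure G"
  define K where "K = measure_of UNIV (sets borel) (\<lambda>A. emeasure ?\<mu> A + emeasure ?\<nu> A)"
  have sa: "sigma_algebra UNIV (sets (borel :: real measure))"
    using sets.sigma_algebra_axioms[of borel] by simp
  have pos: "positive (sets borel) (\<lambda>A. emeasure ?\<mu> A + emeasure ?\<nu> A)"
    unfolding positive_def by simp
  have ca: "countably_additive (sets borel) (\<lambda>A. emeasure ?\<mu> A + emeasure ?\<nu> A)"
    unfolding countably_additive_def
  proof (intro allI impI)
    fix A :: "nat \<Rightarrow> real set"
    assume A: "range A \<subseteq> sets borel" "disjoint_family A" "\<Union> (range A) \<in> sets borel"
    have "(\<Sum>i. emeasure ?\<mu> (A i) + emeasure ?\<nu> (A i)) = (\<Sum>i. emeasure ?\<mu> (A i)) + (\<Sum>i. emeasure ?\<nu> (A i))"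
      by (rule suminf_add[symmetric]) auto
    also have "\<dots> = emeasure ?\<mu> (\<Union> (range A)) + emeasure ?\<nu> (\<Union> (range A))"
      using A by (simp add: suminf_emeasure)
    finally show "(\<Sum>i. emeasure ?\<mu> (A i) + emeasure ?\<nu> (A i)) = emeasure ?\<mu> (\<Union> (range A)) + emeasure ?\<nu> (\<Union> (range A))" .
  qed
  have eK: "emeasure K A = emeasure ?\<mu> A + emeasure ?\<nu> A" if "A \<in> sets borel" for A
    unfolding K_def by (rule emeasure_measure_of_sigma[OF sa pos ca that])
  have sK: "sets K = sets borel" unfolding K_def by (simp add: sets_measure_of sigma_algebra.sigma_sets_eq[OF sa])
  have "K = lborel"
  proof (rule measure_eqI_generator_eq[where E="range (\<lambda>(a, b). {a<..b::real})" and \<Omega>=UNIV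
        and A="\<lambda>i. {- real i <.. real i}"])
    show "Int_stable (range (\<lambda>(a, b). {a<..b::real}))"
      unfolding Int_stable_def by (auto simp: Int_greaterThanAtMost image_iff)
    show "range (\<lambda>(a, b). {a<..b::real}) \<subseteq> Pow UNIV" by simp
    show "sets K = sigma_sets UNIV (range (\<lambda>(a, b). {a<..b::real}))" using sK sets_borel_Ioc by simp
    show "sets lborel = sigma_sets UNIV (range (\<lambda>(a, b). {a<..b::real}))" using sets_borel_Ioc by simp
    show "range (\<lambda>i. {- real i<..real i}) \<subseteq> range (\<lambda>(a, b). {a<..b::real})"
      by (auto simp: image_iff)
    show "(\<Union>i. {- real i<..real i}) = UNIV"
    proof (rule set_eqI, simp)
      fix x :: real
      obtain n :: nat where "\<bar>x\<bar> < real n" using reals_Archimedean2 by blast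
      then show "\<exists>i. - real i < x \<and> x \<le> real i" by (intro exI[of _ n]) auto
    qed
    fix i :: nat
    show "emeasure K {- real i<..real i} \<noteq> \<infinity>"
      by (simp add: eK emeasure_interval_measure_Ioc_eq[OF mono rcF]
                    emeasure_interval_measure_Ioc_eq[OF monoG rcG])
  next
    fix X assume "X \<in> range (\<lambda>(a, b). {a<..b::real})"
    then obtain a b where X: "X = {a<..b}" by auto
    show "emeasure K X = emeasure lborel X"
    proof (cases "a \<le> b")
      case True
      have "emeasure K X = ennreal (F b - F a) + ennreal (G b - G a)"
        using True by (simp add: X eK emeasure_interval_measure_Ioc_eq[OF mono rcF]
                    emeasure_interval_measure_Ioc_eq[OF monoG rcG])
      also have "\<dots> = ennreal (b - a)"
        using mono[OF True] monoG[OF True] by (simp add: ennreal_plus[symmetric] G_def del: ennreal_plus)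
      finally show ?thesis using True by (simp add: X)
    next
      case False then show ?thesis by (simp add: X eK)
    qed
  qed
  show ?thesis
    unfolding absolutely_continuous_def
  proof
    fix N :: "real set" assume N: "N \<in> null_sets lborel"
    then have Nb: "N \<in> sets borel" by auto
    have "emeasure ?\<mu> N \<le> emeasure K N" using eK[OF Nb] by simp
    also have "\<dots> = 0" using N \<open>K = lborel\<close> by auto
    finally show "N \<in> null_sets ?\<mu>" using Nb by (auto simp: null_sets_def)
  qed
qed


lemma lip_density:
  fixes F :: "real \<Rightarrow> real"
  assumes mono: "\<And>a b. a \<le> b \<Longrightarrow> F a \<le> F b" and lip: "\<And>a b. a \<le> b \<Longrightarrow> F b - F a \<le> b - a"
  shows "\<exists>f. (\<forall>x. 0 \<le> f x) \<and> f \<in> borel_measurable borel \<and>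
     (\<forall>a b. a \<le> b \<longrightarrow> (f has_integral (F b - F a)) {a..b}) \<and>
     (\<forall>W. open W \<longrightarrow> (\<forall>a b. a \<le> b \<longrightarrow> {a..b} \<subseteq> W \<longrightarrow> F a = F b) \<longrightarrow> negligible {x\<in>W. f x \<noteq> 0})"
proof -
  have contF: "continuous_on UNIV F" by (rule lip_cont_real[OF mono lip])
  let ?\<mu> = "interval_measure F"
  have ac: "absolutely_continuous lborel ?\<mu>" by (rule interval_measure_lip_ac[OF mono lip])
  have "\<exists>g \<in> borel_measurable lborel. density lborel g = ?\<mu>"
    by (rule sigma_finite_measure.Radon_Nikodym[OF sigma_finite_lborel ac]) simp
  then obtain g where gm: "g \<in> borel_measurable lborel" and gd: "density lborel g = ?\<mu>" by blast
  define f where "f x = enn2real (g x)" for x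
  have fm: "f \<in> borel_measurable borel" unfolding f_def[abs_def] using gm by simp
  have fnn: "0 \<le> f x" for x unfolding f_def by simp
  have muI: "emeasure ?\<mu> {a..b} = ennreal (F b - F a)" if "a \<le> b" for a b
    by (rule emeasure_interval_measure_Icc[OF that mono contF])
  have int: "(f has_integral (F b - F a)) {a..b}" if ab: "a \<le> b" for a b
  proof -
    have g1: "(\<integral>\<^sup>+ x. g x * indicator {a..b} x \<partial>lborel) = ennreal (F b - F a)"
      using emeasure_density[OF gm, of "{a..b}"] gd muI[OF ab] by simp
    have "AE x in lborel. g x * indicator {a..b} x \<noteq> \<infinity>"
      by (rule nn_integral_PInf_AE) (use gm g1 in auto)
    then have "AE x in lborel. ennreal (f x * indicator {a..b} x) = g x * indicator {a..b} x"
      by eventually_elim (auto simp: f_def indicator_def less_top[symmetric] ennreal_enn2real)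
    then have "(\<integral>\<^sup>+ x. ennreal (f x * indicator {a..b} x) \<partial>lborel) = ennreal (F b - F a)"
      using g1 by (simp add: nn_integral_cong_AE)
    then have "((\<lambda>x. f x * indicator {a..b} x) has_integral (F b - F a)) UNIV"
      by (intro nn_integral_has_integral) (use fm fnn mono[OF ab] in auto)
    moreover have "(\<lambda>x. f x * indicator {a..b} x) = (\<lambda>x. if x \<in> {a..b} then f x else 0)"
      by (auto simp: indicator_def)
    ultimately have "((\<lambda>x. if x \<in> {a..b} then f x else 0) has_integral (F b - F a)) UNIV"
      by metis
    then show ?thesis by (simp only: has_integral_restrict_UNIV)
  qed
  have zero: "negligible {x\<in>W. f x \<noteq> 0}"
    if W: "open W" and H: "\<forall>a b. a \<le> b \<longrightarrow> {a..b} \<subseteq> W \<longrightarrow> F a = F b" for W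
  proof -
    define I where "I = {p \<in> \<rat> \<times> \<rat>. fst p \<le> snd p \<and> {fst p..snd p} \<subseteq> W}"
    have cI: "countable I" unfolding I_def
      by (rule countable_subset[OF _ countable_SIGMA[OF countable_rat countable_rat]]) auto
    have Oeq: "W = (\<Union>p\<in>I. {fst p..snd p})"
    proof
      show "(\<Union>p\<in>I. {fst p..snd p}) \<subseteq> W" unfolding I_def by auto
      show "W \<subseteq> (\<Union>p\<in>I. {fst p..snd p})"
      proof
        fix x assume "x \<in> W"
        then obtain e where e: "e > 0" "ball x e \<subseteq> W" using W open_contains_ball by blast
        obtain a where a: "a \<in> \<rat>" "x - e < a" "a < x" using Rats_dense_in_real[of "x - e" x] e by auto
        obtain b where b: "b \<in> \<rat>" "x < b" "b < x + e" using Rats_dense_in_real[of x "x + e"] e by auto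
        have "{a..b} \<subseteq> ball x e" using a b by (auto simp: dist_real_def)
        then have "(a, b) \<in> I" using a b e unfolding I_def by auto
        then show "x \<in> (\<Union>p\<in>I. {fst p..snd p})" using a b by force
      qed
    qed
    have "(\<Union>p\<in>I. {fst p..snd p}) \<in> null_sets ?\<mu>"
    proof (rule null_sets_UN'[OF cI])
      fix p assume p: "p \<in> I"
      then have "fst p \<le> snd p" "{fst p..snd p} \<subseteq> W" unfolding I_def by auto
      then have "emeasure ?\<mu> {fst p..snd p} = 0" using muI H by simp
      then show "{fst p..snd p} \<in> null_sets ?\<mu>" by (auto simp: null_sets_def)
    qed
    then have Onull: "emeasure ?\<mu> W = 0" using Oeq by (auto simp: null_sets_def)
    have Ob: "W \<in> sets borel" using W by simp
    have "(\<integral>\<^sup>+ x. g x * indicator W x \<partial>lborel) = 0"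
      using emeasure_density[OF gm, of W] gd Onull Ob by simp
    then have "AE x in lborel. g x * indicator W x = 0"
      by (subst (asm) nn_integral_0_iff_AE) (use gm Ob in auto)
    then obtain N where N: "N \<in> null_sets lborel" "{x \<in> space lborel. \<not> g x * indicator W x = 0} \<subseteq> N"
      unfolding eventually_ae_filter by blast
    have "{x\<in>W. f x \<noteq> 0} \<subseteq> N"
    proof
      fix x assume "x \<in> {x\<in>W. f x \<noteq> 0}"
      then have "x \<in> W" "g x \<noteq> 0" by (auto simp: f_def)
      then show "x \<in> N" using N(2) by auto
    qed
    moreover have "negligible N"
      using N(1) by (simp add: negligible_iff_null_sets null_sets_completionI)
    ultimately show ?thesis by (rule negligible_subset[rotated])
  qed
  show ?thesis using fnn fm int zero by blast
qed


lemma nn_integral_interval_tail: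
  fixes f :: "real \<Rightarrow> real"
  assumes fm: "f \<in> borel_measurable borel" and fnn: "\<And>x. 0 \<le> f x" and tau: "0 \<le> \<tau>"
    and J: "\<And>a. 0 \<le> a \<Longrightarrow> a \<le> \<tau> \<Longrightarrow> (f has_integral J a) {a..\<tau>}"
  shows "(\<integral>\<^sup>+ y. ennreal (f y) * indicator {0..\<tau>} y * indicator {x<..} y \<partial>lborel)
          = ennreal (J (min \<tau> (max 0 x)))"
proof -
  define a where "a = min \<tau> (max 0 x)"
  have a: "0 \<le> a" "a \<le> \<tau>" using tau by (auto simp: a_def)
  define S where "S = {0..\<tau>} \<inter> {x<..}"
  have S1: "S \<subseteq> {a..\<tau>}" by (auto simp: S_def a_def)
  have S2: "{a..\<tau>} \<subseteq> S \<union> {a}" by (auto simp: S_def a_def)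
  have "(f has_integral J a) S"
  proof (subst has_integral_spike_set_eq)
    have "{y \<in> S - {a..\<tau>}. f y \<noteq> 0} = {}" using S1 by blast
    then show "negligible {y \<in> S - {a..\<tau>}. f y \<noteq> 0}" by (simp only: negligible_empty)
    show "negligible {y \<in> {a..\<tau>} - S. f y \<noteq> 0}"
      by (rule negligible_subset[OF negligible_sing[of a]]) (use S2 in auto)
    show "(f has_integral J a) {a..\<tau>}" by (rule J[OF a])
  qed
  then have "((\<lambda>y. if y \<in> S then f y else 0) has_integral J a) UNIV"
    by (simp only: has_integral_restrict_UNIV)
  moreover have "(\<lambda>y. if y \<in> S then f y else 0) = (\<lambda>y. f y * indicator S y)"
    by (auto simp: indicator_def)
  ultimately have hi: "((\<lambda>y. f y * indicator S y) has_integral J a) UNIV" by simp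
  have "(\<integral>\<^sup>+ y. ennreal (f y * indicator S y) \<partial>lborel) = ennreal (J a)"
  proof (rule nn_integral_has_integral_lborel[OF _ _ hi])
    have Sb: "S \<in> sets borel" unfolding S_def by auto
    show "(\<lambda>y. f y * indicator S y) \<in> borel_measurable borel"
      using fm Sb by (intro borel_measurable_times borel_measurable_indicator) auto
  qed (use fnn in auto)
  moreover have "(\<lambda>y. ennreal (f y) * indicator {0..\<tau>} y * indicator {x<..} y) = (\<lambda>y. ennreal (f y * indicator S y))"
    by (auto simp: S_def indicator_def)
  ultimately show ?thesis by (simp add: a_def)
qed

lemma ae_eq_by_tails:
  fixes f1 f2 :: "real \<Rightarrow> real"
  assumes f1m: "f1 \<in> borel_measurable borel" and f1nn: "\<And>x. 0 \<le> f1 x"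
    and f2m: "f2 \<in> borel_measurable borel" and f2nn: "\<And>x. 0 \<le> f2 x" and tau: "0 \<le> \<tau>"
    and J1: "\<And>a. 0 \<le> a \<Longrightarrow> a \<le> \<tau> \<Longrightarrow> (f1 has_integral J a) {a..\<tau>}"
    and J2: "\<And>a. 0 \<le> a \<Longrightarrow> a \<le> \<tau> \<Longrightarrow> (f2 has_integral J a) {a..\<tau>}"
  shows "negligible {x\<in>{0..\<tau>}. f1 x \<noteq> f2 x}"
proof -
  define g1 where "g1 y = ennreal (f1 y) * indicator {0..\<tau>} y" for y
  define g2 where "g2 y = ennreal (f2 y) * indicator {0..\<tau>} y" for y
  have g1m: "g1 \<in> borel_measurable lborel" unfolding g1_def[abs_def] using f1m by simp
  have g2m: "g2 \<in> borel_measurable lborel" unfolding g2_def[abs_def] using f2m by simp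
  have e1: "emeasure (density lborel g1) {x<..} = ennreal (J (min \<tau> (max 0 x)))" for x
    using emeasure_density[OF g1m, of "{x<..}"] nn_integral_interval_tail[OF f1m f1nn tau J1, of x]
    by (simp add: g1_def mult.assoc)
  have e2: "emeasure (density lborel g2) {x<..} = ennreal (J (min \<tau> (max 0 x)))" for x
    using emeasure_density[OF g2m, of "{x<..}"] nn_integral_interval_tail[OF f2m f2nn tau J2, of x]
    by (simp add: g2_def mult.assoc)
  have eq: "density lborel g1 = density lborel g2"
    by (rule measure_eqI_lessThan) (simp_all add: e1 e2)
  have fin: "integral\<^sup>N lborel g1 \<noteq> \<infinity>"
  proof -
    have "integral\<^sup>N lborel g1 = (\<integral>\<^sup>+ y. ennreal (f1 y) * indicator {0..\<tau>} y * indicator {(-1)<..} y \<partial>lborel)"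
      unfolding g1_def by (intro nn_integral_cong) (auto simp: indicator_def)
    also have "\<dots> = ennreal (J (min \<tau> (max 0 (-1))))"
      by (rule nn_integral_interval_tail[OF f1m f1nn tau J1])
    finally show ?thesis by simp
  qed
  have "AE x in lborel. g1 x = g2 x"
    using eq finite_density_unique[OF g1m g2m _ _ fin] by simp
  then obtain N where N: "N \<in> null_sets lborel" "{x \<in> space lborel. \<not> g1 x = g2 x} \<subseteq> N"
    unfolding eventually_ae_filter by blast
  have "{x\<in>{0..\<tau>}. f1 x \<noteq> f2 x} \<subseteq> N"
  proof
    fix x assume x: "x \<in> {x\<in>{0..\<tau>}. f1 x \<noteq> f2 x}"
    then have "g1 x \<noteq> g2 x" using f1nn[of x] f2nn[of x] by (auto simp: g1_def g2_def)
    then show "x \<in> N" using N(2) by auto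
  qed
  moreover have "negligible N"
    using N(1) by (simp add: negligible_iff_null_sets null_sets_completionI)
  ultimately show ?thesis by (rule negligible_subset[rotated])
qed


context game begin

lemma UU_shift_ftc:
  assumes "a \<le> b"
  shows "((\<lambda>\<rho>. xi (c + \<rho>) - UU (c + \<rho>)) has_integral (UU (c + b) - UU (c + a))) {a..b}"
proof (rule fundamental_theorem_of_calculus[OF assms])
  fix x assume "x \<in> {a..b}"
  have d: "((\<lambda>\<rho>. c + \<rho>) has_vector_derivative 1) (at x within {a..b})"
    by (auto intro!: derivative_eq_intros simp: has_real_derivative_iff_has_vector_derivative[symmetric])
  have "(UU has_vector_derivative (xi (c + x) - UU (c + x))) (at (c + x) within (\<lambda>\<rho>. c + \<rho>) ` {a..b})"
    using UU_deriv has_vector_derivative_at_within by blast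
  from vector_diff_chain_within[OF d this]
  show "((\<lambda>\<rho>. UU (c + \<rho>)) has_vector_derivative xi (c + x) - UU (c + x)) (at x within {a..b})"
    by (simp add: o_def)
qed

lemma xi_shift_int: "(\<lambda>\<rho>. xi (c + \<rho>)) integrable_on {a..b}"
  by (intro integrable_continuous_real continuous_on_compose2[OF xi_cont[of UNIV]])
     (auto intro!: continuous_intros)

lemma UU_shift_int: "(\<lambda>\<rho>. UU (c + \<rho>)) integrable_on {a..b}"
  by (intro integrable_continuous_real continuous_on_compose2[OF UU_cont[of UNIV]])
     (auto intro!: continuous_intros)

lemma xi_shift_integral:
  assumes "a \<le> b"
  shows "integral {a..b} (\<lambda>\<rho>. xi (c + \<rho>)) = UU (c + b) - UU (c + a) + integral {a..b} (\<lambda>\<rho>. UU (c + \<rho>))"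
proof -
  have "integral {a..b} (\<lambda>\<rho>. xi (c + \<rho>) - UU (c + \<rho>)) = UU (c + b) - UU (c + a)"
    using UU_shift_ftc[OF assms] by (rule integral_unique)
  moreover have "integral {a..b} (\<lambda>\<rho>. xi (c + \<rho>) - UU (c + \<rho>))
      = integral {a..b} (\<lambda>\<rho>. xi (c + \<rho>)) - integral {a..b} (\<lambda>\<rho>. UU (c + \<rho>))"
    by (rule integral_diff[OF xi_shift_int UU_shift_int])
  ultimately have "integral {a..b} (\<lambda>\<rho>. xi (c + \<rho>)) - integral {a..b} (\<lambda>\<rho>. UU (c + \<rho>)) = UU (c + b) - UU (c + a)"
    by simp
  then show ?thesis by (simp add: diff_eq_eq)
qed

end

locale lim_setup = game A B h1 h2 y
  for A :: "'a::finite \<Rightarrow> 'b::finite \<Rightarrow> real" and B h1 h2 y +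
  fixes s :: "nat \<Rightarrow> real" and \<tau> :: real and Z :: "real \<Rightarrow> (real^'a) \<times> (real^'b)"
  assumes s_top: "filterlim s at_top sequentially"
    and tau: "\<tau> > 0"
    and Zc: "continuous_on {0..\<tau>} Z"
    and unif: "\<And>e. e > 0 \<Longrightarrow> \<exists>N. \<forall>n\<ge>N. \<forall>r\<in>{0..\<tau>}. norm (UU (s n + r) - Z r) < e"
begin

definition Q :: "real \<Rightarrow> real \<Rightarrow> (real^'a) \<times> (real^'b)" where
  "Q a b = Z b - Z a + integral {a..b} Z"

lemma Z_int: "0 \<le> a \<Longrightarrow> b \<le> \<tau> \<Longrightarrow> Z integrable_on {a..b}"
  by (rule integrable_continuous_real) (auto intro: continuous_on_subset[OF Zc])

lemma UU_ptwise: "r \<in> {0..\<tau>} \<Longrightarrow> (\<lambda>n. UU (s n + r)) \<longlonglongrightarrow> Z r"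
proof (rule LIMSEQ_I)
  fix e :: real assume "e > 0" "r \<in> {0..\<tau>}"
  then obtain N where "\<forall>n\<ge>N. \<forall>r\<in>{0..\<tau>}. norm (UU (s n + r) - Z r) < e" using unif by blast
  then show "\<exists>N. \<forall>n\<ge>N. norm (UU (s n + r) - Z r) < e" using \<open>r \<in> {0..\<tau>}\<close> by blast
qed

lemma UU_int_conv:
  assumes ab: "0 \<le> a" "a \<le> b" "b \<le> \<tau>"
  shows "(\<lambda>n. integral {a..b} (\<lambda>\<rho>. UU (s n + \<rho>))) \<longlonglongrightarrow> integral {a..b} Z"
proof (rule LIMSEQ_I)
  fix e :: real assume e: "e > 0"
  define e' where "e' = e / (b - a + 1)"
  have e': "e' > 0" using e ab by (simp add: e'_def)
  obtain N where N: "\<forall>n\<ge>N. \<forall>r\<in>{0..\<tau>}. norm (UU (s n + r) - Z r) < e'" using unif[OF e'] by blast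
  have "norm (integral {a..b} (\<lambda>\<rho>. UU (s n + \<rho>)) - integral {a..b} Z) < e" if n: "n \<ge> N" for n
  proof -
    have "integral {a..b} (\<lambda>\<rho>. UU (s n + \<rho>)) - integral {a..b} Z = integral {a..b} (\<lambda>\<rho>. UU (s n + \<rho>) - Z \<rho>)"
      by (rule integral_diff[symmetric, OF UU_shift_int Z_int]) (use ab in auto)
    moreover have "norm (integral {a..b} (\<lambda>\<rho>. UU (s n + \<rho>) - Z \<rho>)) \<le> e' * Henstock_Kurzweil_Integration.content {a..b}"
    proof (rule has_integral_bound_real[where S="{}"])
      show "((\<lambda>\<rho>. UU (s n + \<rho>) - Z \<rho>) has_integral integral {a..b} (\<lambda>\<rho>. UU (s n + \<rho>) - Z \<rho>)) {a..b}"
        by (intro integrable_integral integrable_diff UU_shift_int Z_int) (use ab in auto)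
      show "\<And>x. x \<in> {a..b} - {} \<Longrightarrow> norm (UU (s n + x) - Z x) \<le> e'"
        using N n ab by (meson atLeastAtMost_iff less_imp_le order_trans DiffD1)
    qed (use e' in auto)
    moreover have "e' * Henstock_Kurzweil_Integration.content {a..b} < e"
      using ab e by (simp add: e'_def field_simps)
    ultimately show ?thesis by simp
  qed
  then show "\<exists>N. \<forall>n\<ge>N. norm (integral {a..b} (\<lambda>\<rho>. UU (s n + \<rho>)) - integral {a..b} Z) < e" by blast
qed

lemma xi_int_conv:
  assumes ab: "0 \<le> a" "a \<le> b" "b \<le> \<tau>"
  shows "(\<lambda>n. integral {a..b} (\<lambda>\<rho>. xi (s n + \<rho>))) \<longlonglongrightarrow> Q a b"
proof -
  have "(\<lambda>n. UU (s n + b) - UU (s n + a) + integral {a..b} (\<lambda>\<rho>. UU (s n + \<rho>))) \<longlonglongrightarrow> Q a b"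
    unfolding Q_def using ab
    by (intro tendsto_add tendsto_diff UU_ptwise UU_int_conv) auto
  then show ?thesis using xi_shift_integral[OF ab(2)] by simp
qed

lemma Q_add:
  assumes ab: "0 \<le> a" "a \<le> b" "b \<le> \<tau>"
  shows "Q 0 b - Q 0 a = Q a b"
proof -
  have "integral {0..a} Z + integral {a..b} Z = integral {0..b} Z"
    by (rule Henstock_Kurzweil_Integration.integral_combine) (use ab Z_int in auto)
  then show ?thesis unfolding Q_def by (simp add: algebra_simps)
qed

lemma Q_00: "Q 0 0 = 0" by (simp add: Q_def)

end


lemma axis_sum: "(\<Sum>d\<in>UNIV. (axis c (1::real) :: real^'c::finite) $ d) = 1"
  by (simp add: axis_def)

lemma transfer_bound:
  fixes \<xi> v :: "real^'c::finite"
  assumes xi: "\<xi> \<in> mixed_strats" and cc: "c \<noteq> c'"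
    and br: "\<And>p. p \<in> mixed_strats \<Longrightarrow> v \<bullet> p - v \<bullet> \<xi> \<le> \<delta>"
  shows "\<xi> $ c * (v $ c' - v $ c) \<le> \<delta>"
proof -
  define p where "p = \<xi> + (\<xi> $ c) *\<^sub>R (axis c' 1 - axis c 1)"
  have p: "p \<in> mixed_strats"
    unfolding mixed_strats_def
  proof (intro CollectI conjI allI)
    fix d
    show "0 \<le> p $ d" using ms_nonneg[OF xi, of d] ms_nonneg[OF xi, of c] cc
      by (auto simp: p_def axis_def)
    show "(\<Sum>i\<in>UNIV. p $ i) = 1"
      using ms_sum[OF xi] by (simp add: p_def sum.distrib sum_subtractf sum_distrib_left[symmetric] axis_sum)
  qed
  have "v \<bullet> p - v \<bullet> \<xi> = \<xi> $ c * (v $ c' - v $ c)"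
    by (simp add: p_def inner_add_right inner_diff_right inner_axis algebra_simps)
  then show ?thesis using br[OF p] by simp
qed

lemma br_of_support:
  fixes pd v :: "real^'c::finite"
  assumes pd: "pd \<in> mixed_strats" and sup: "\<And>c c'. pd $ c \<noteq> 0 \<Longrightarrow> v $ c' \<le> v $ c"
  shows "pd \<in> best_resp v"
proof -
  obtain c0 where c0: "pd $ c0 \<noteq> 0"
  proof (rule ccontr)
    assume "\<not> thesis"
    then have "\<forall>c. pd $ c = 0" using that by blast
    then show False using ms_sum[OF pd] by simp
  qed
  have eqv: "v $ c * pd $ c = v $ c0 * pd $ c" for c
  proof (cases "pd $ c = 0")
    case False
    then have "v $ c = v $ c0" using sup[OF False, of c0] sup[OF c0, of c] by simp
    then show ?thesis by simp
  qed simp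
  have vpd: "v \<bullet> pd = v $ c0"
    using ms_sum[OF pd] by (simp add: inner_vec_def eqv sum_distrib_left[symmetric])
  show ?thesis
    unfolding best_resp_def
  proof (intro CollectI conjI ballI)
    show "pd \<in> mixed_strats" by fact
    fix p' :: "real^'c" assume p': "p' \<in> mixed_strats"
    have "v \<bullet> p' = (\<Sum>c\<in>UNIV. v $ c * p' $ c)" by (simp add: inner_vec_def)
    also have "\<dots> \<le> (\<Sum>c\<in>UNIV. v $ c0 * p' $ c)"
      by (rule sum_mono) (use sup[OF c0] ms_nonneg[OF p'] in \<open>auto intro: mult_right_mono\<close>)
    also have "\<dots> = v $ c0" using ms_sum[OF p'] by (simp add: sum_distrib_left[symmetric])
    finally show "v \<bullet> p' \<le> v \<bullet> pd" using vpd by simp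
  qed
qed

context lim_setup begin

lemma comp_bounds:
  fixes proj :: "(real^'a) \<times> (real^'b) \<Rightarrow> real^'c::finite"
  assumes pl: "bounded_linear proj" and pin: "\<And>t. proj (xi t) \<in> mixed_strats"
    and ab: "0 \<le> a" "a \<le> b" "b \<le> \<tau>"
  shows "0 \<le> proj (Q a b) $ c" "proj (Q a b) $ c \<le> b - a" "(\<Sum>c\<in>UNIV. proj (Q a b) $ c) = b - a"
proof -
  have bl: "bounded_linear (\<lambda>z. proj z $ c)" for c
    using bounded_linear_compose[OF bounded_linear_vec_nth pl] by (simp add: o_def)
  define t where "t n = proj (integral {a..b} (\<lambda>\<rho>. xi (s n + \<rho>)))" for n
  have tl: "t \<longlonglongrightarrow> proj (Q a b)"
    unfolding t_def by (rule bounded_linear.tendsto[OF pl xi_int_conv[OF ab]])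
  have tn: "0 \<le> t n $ c \<and> t n $ c \<le> b - a \<and> (\<Sum>c\<in>UNIV. t n $ c) = b - a" for n c
  proof (cases "a = b")
    case True then show ?thesis by (simp add: t_def linear_0[OF bounded_linear.linear[OF pl]])
  next
    case False
    then have ab': "a < b" using ab by simp
    have "((\<lambda>\<rho>. proj (xi (s n + \<rho>))) has_integral t n) {a..b}"
      unfolding t_def using has_integral_linear[OF integrable_integral[OF xi_shift_int] pl]
      by (simp add: o_def)
    from avg_in_ms[OF this ab' pin]
    have m: "(1 / (b - a)) *\<^sub>R t n \<in> mixed_strats" .
    have "t n $ c = (b - a) * ((1 / (b - a)) *\<^sub>R t n) $ c" using ab' by simp
    moreover have "(\<Sum>c\<in>UNIV. t n $ c) = (b - a) * (\<Sum>c\<in>UNIV. ((1 / (b - a)) *\<^sub>R t n) $ c)"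
      using ab' by (simp add: sum_divide_distrib[symmetric])
    ultimately show ?thesis using ms_nonneg[OF m, of c] ms_le1[OF m, of c] ms_sum[OF m] ab'
      by (auto simp: mult_le_cancel_left1 zero_le_divide_iff)
  qed
  have tlc: "(\<lambda>n. t n $ c) \<longlonglongrightarrow> proj (Q a b) $ c" for c
    using bounded_linear.tendsto[OF bounded_linear_vec_nth tl] by simp
  show "0 \<le> proj (Q a b) $ c" by (rule LIMSEQ_le_const[OF tlc]) (use tn in auto)
  show "proj (Q a b) $ c \<le> b - a" by (rule LIMSEQ_le_const2[OF tlc]) (use tn in auto)
  have "(\<lambda>n. \<Sum>c\<in>UNIV. t n $ c) \<longlonglongrightarrow> (\<Sum>c\<in>UNIV. proj (Q a b) $ c)"
    by (intro tendsto_sum tlc)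
  then show "(\<Sum>c\<in>UNIV. proj (Q a b) $ c) = b - a"
    using tn by (simp add: LIMSEQ_const_iff)
qed


lemma exp_neg_s_lim: "(\<lambda>n. exp (- s n)) \<longlonglongrightarrow> 0"
proof -
  have "filterlim (\<lambda>n. - s n) at_bot sequentially"
    using filterlim_uminus_at_top[THEN iffD1, OF s_top] .
  then show ?thesis by (rule filterlim_compose[OF exp_at_bot])
qed

lemma key_claim:
  fixes proj vv :: "(real^'a) \<times> (real^'b) \<Rightarrow> real^'c::finite"
  assumes pl: "bounded_linear proj" and vl: "bounded_linear vv"
    and pin: "\<And>t. proj (xi t) \<in> mixed_strats"
    and eps: "\<And>t p. p \<in> mixed_strats \<Longrightarrow> vv (UU t) \<bullet> p - vv (UU t) \<bullet> proj (xi t) \<le> C * exp (- t)"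
    and ab: "0 \<le> a" "a \<le> b" "b \<le> \<tau>"
    and gap: "\<And>r. r \<in> {a..b} \<Longrightarrow> \<exists>c'. vv (Z r) $ c < vv (Z r) $ c'"
  shows "proj (Q a b) $ c = 0"
proof -
  define m where "m r = (\<Sum>c'\<in>UNIV. max 0 (vv (Z r) $ c' - vv (Z r) $ c))" for r
  have vZ: "continuous_on {a..b} (\<lambda>r. vv (Z r))"
    by (rule bounded_linear.continuous_on[OF vl]) (rule continuous_on_subset[OF Zc], use ab in auto)
  have vZc: "continuous_on {a..b} (\<lambda>r. vv (Z r) $ d)" for d
    using bounded_linear.continuous_on[OF bounded_linear_vec_nth vZ] .
  have mc: "continuous_on {a..b} m"
    unfolding m_def[abs_def] by (intro continuous_intros vZc)
  have mpos: "m r > 0" if r: "r \<in> {a..b}" for r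
  proof -
    obtain c' where c': "vv (Z r) $ c < vv (Z r) $ c'" using gap[OF r] by blast
    show ?thesis unfolding m_def by (rule sum_pos2[of UNIV c']) (use c' in auto)
  qed
  obtain r0 where r0: "r0 \<in> {a..b}" "\<And>r. r \<in> {a..b} \<Longrightarrow> m r0 \<le> m r"
    using continuous_attains_inf[OF compact_Icc _ mc] ab by auto
  define \<eta> where "\<eta> = m r0"
  have eta: "\<eta> > 0" using mpos[OF r0(1)] by (simp add: \<eta>_def)
  define k where "k = real CARD('c)"
  have k: "k \<ge> 1" by (simp add: k_def)
  have gap2: "\<exists>c'. c' \<noteq> c \<and> vv (Z r) $ c' - vv (Z r) $ c \<ge> \<eta> / k" if r: "r \<in> {a..b}" for r
  proof (rule ccontr)
    assume "\<not> ?thesis"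
    then have lt: "max 0 (vv (Z r) $ c' - vv (Z r) $ c) < \<eta> / k" for c'
      using eta k by (cases "c' = c") (auto simp: not_le)
    have "m r < of_nat (card (UNIV :: 'c set)) * (\<eta> / k)"
      unfolding m_def by (rule sum_bounded_above_strict) (use lt in auto)
    also have "\<dots> = \<eta>" using k by (simp add: k_def)
    finally show False using r0(2)[OF r] by (simp add: \<eta>_def)
  qed
  obtain Kv where Kv: "Kv > 0" "\<And>z. norm (vv z) \<le> norm z * Kv"
    using bounded_linear.pos_bounded[OF vl] by blast
  define e1 where "e1 = \<eta> / (4 * k * Kv)"
  have e1: "e1 > 0" using eta k Kv by (simp add: e1_def)
  obtain N1 where N1: "\<forall>n\<ge>N1. \<forall>r\<in>{0..\<tau>}. norm (UU (s n + r) - Z r) < e1" using unif[OF e1] by blast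
  define \<kappa> where "\<kappa> = \<eta> / (2 * k)"
  have kap: "\<kappa> > 0" using eta k by (simp add: \<kappa>_def)
  have pt: "proj (xi (s n + r)) $ c \<le> \<bar>C\<bar> * exp (- s n) / \<kappa>" if n: "n \<ge> N1" and r: "r \<in> {a..b}" for n r
  proof -
    obtain c' where c': "c' \<noteq> c" "vv (Z r) $ c' - vv (Z r) $ c \<ge> \<eta> / k" using gap2[OF r] by blast
    have rt: "r \<in> {0..\<tau>}" using r ab by auto
    have close: "\<bar>vv (UU (s n + r)) $ d - vv (Z r) $ d\<bar> \<le> \<eta> / (4 * k)" for d
    proof -
      have "\<bar>vv (UU (s n + r)) $ d - vv (Z r) $ d\<bar> \<le> norm (vv (UU (s n + r)) - vv (Z r))"
        using component_le_norm_cart[of "vv (UU (s n + r)) - vv (Z r)" d] by simp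
      also have "\<dots> = norm (vv (UU (s n + r) - Z r))" by (simp add: linear_diff[OF bounded_linear.linear[OF vl]])
      also have "\<dots> \<le> norm (UU (s n + r) - Z r) * Kv" by (rule Kv(2))
      also have "\<dots> \<le> e1 * Kv" using N1 n rt Kv(1) by (simp add: less_imp_le)
      also have "\<dots> = \<eta> / (4 * k)" using Kv(1) by (simp add: e1_def)
      finally show ?thesis .
    qed
    have d: "vv (UU (s n + r)) $ c' - vv (UU (s n + r)) $ c \<ge> \<kappa>"
      using close[of c'] close[of c] c'(2) k eta unfolding \<kappa>_def by (simp add: field_simps abs_le_iff)
    have "proj (xi (s n + r)) $ c * (vv (UU (s n + r)) $ c' - vv (UU (s n + r)) $ c) \<le> C * exp (- (s n + r))"
      by (rule transfer_bound[OF pin c'(1)[symmetric]]) (rule eps)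
    also have "\<dots> \<le> \<bar>C\<bar> * exp (- s n)"
    proof -
      have "exp (- (s n + r)) \<le> exp (- s n)" using rt by simp
      then have "\<bar>C\<bar> * exp (- (s n + r)) \<le> \<bar>C\<bar> * exp (- s n)" by (simp add: mult_left_mono)
      moreover have "C * exp (- (s n + r)) \<le> \<bar>C\<bar> * exp (- (s n + r))" by (simp add: mult_right_mono)
      ultimately show ?thesis by linarith
    qed
    finally have "proj (xi (s n + r)) $ c * (vv (UU (s n + r)) $ c' - vv (UU (s n + r)) $ c) \<le> \<bar>C\<bar> * exp (- s n)" .
    moreover have "proj (xi (s n + r)) $ c * \<kappa> \<le> proj (xi (s n + r)) $ c * (vv (UU (s n + r)) $ c' - vv (UU (s n + r)) $ c)"
      using d ms_nonneg[OF pin] by (simp add: mult_left_mono)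
    ultimately show ?thesis using kap by (simp add: field_simps)
  qed
  have bl: "bounded_linear (\<lambda>z. proj z $ c)"
    using bounded_linear_compose[OF bounded_linear_vec_nth pl] by (simp add: o_def)
  define t where "t n = proj (integral {a..b} (\<lambda>\<rho>. xi (s n + \<rho>))) $ c" for n
  have tl: "t \<longlonglongrightarrow> proj (Q a b) $ c"
    unfolding t_def by (rule bounded_linear.tendsto[OF bl xi_int_conv[OF ab]])
  have teq: "t n = integral {a..b} (\<lambda>\<rho>. proj (xi (s n + \<rho>)) $ c)" for n
    unfolding t_def using integral_linear[OF xi_shift_int bl] by (simp add: o_def)
  have tb: "t n \<le> (b - a) * (\<bar>C\<bar> * exp (- s n) / \<kappa>)" if n: "n \<ge> N1" for n
  proof -
    have "t n \<le> integral {a..b} (\<lambda>\<rho>. \<bar>C\<bar> * exp (- s n) / \<kappa>)"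
      unfolding teq
    proof (rule integral_le)
      show "(\<lambda>\<rho>. proj (xi (s n + \<rho>)) $ c) integrable_on {a..b}"
        using integrable_linear[OF xi_shift_int bl] by (simp add: o_def)
    qed (use pt[OF n] in auto)
    also have "integral {a..b} (\<lambda>\<rho>. \<bar>C\<bar> * exp (- s n) / \<kappa>) = (b - a) * (\<bar>C\<bar> * exp (- s n) / \<kappa>)"
      using ab by simp
    finally show ?thesis .
  qed
  have zl0: "(\<lambda>n. ((b - a) * \<bar>C\<bar> / \<kappa>) * exp (- s n)) \<longlonglongrightarrow> 0"
    by (rule tendsto_mult_right_zero[OF exp_neg_s_lim])
  have "(\<lambda>n. (b - a) * (\<bar>C\<bar> * exp (- s n) / \<kappa>)) = (\<lambda>n. ((b - a) * \<bar>C\<bar> / \<kappa>) * exp (- s n))"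
    by (rule ext) (simp add: field_simps)
  with zl0 have zl: "(\<lambda>n. (b - a) * (\<bar>C\<bar> * exp (- s n) / \<kappa>)) \<longlonglongrightarrow> 0" by simp
  have "proj (Q a b) $ c \<le> 0"
    by (rule tendsto_le[OF _ zl tl]) (use tb in \<open>auto simp: eventually_sequentially\<close>)
  moreover have "0 \<le> proj (Q a b) $ c" by (rule comp_bounds(1)[OF pl pin ab])
  ultimately show ?thesis by simp
qed

end


context lim_setup begin

lemma player_density:
  fixes proj vv :: "(real^'a) \<times> (real^'b) \<Rightarrow> real^'c::finite"
  assumes pl: "bounded_linear proj" and vl: "bounded_linear vv"
    and pin: "\<And>t. proj (xi t) \<in> mixed_strats"
    and eps: "\<And>t p. p \<in> mixed_strats \<Longrightarrow> vv (UU t) \<bullet> p - vv (UU t) \<bullet> proj (xi t) \<le> C * exp (- t)"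
  shows "\<exists>pd N. negligible N \<and> pd absolutely_integrable_on {0..\<tau>} \<and>
           (\<forall>r\<in>{0..\<tau>}. (pd has_integral proj (Q 0 r)) {0..r}) \<and>
           (\<forall>r\<in>{0..\<tau>} - N. pd r \<in> best_resp (vv (Z r)))"
proof -
  define cl where "cl r = min \<tau> (max 0 r)" for r
  have cl: "0 \<le> cl r" "cl r \<le> \<tau>" for r using tau by (auto simp: cl_def)
  have clm: "a \<le> b \<Longrightarrow> cl a \<le> cl b" for a b by (auto simp: cl_def)
  have cll: "a \<le> b \<Longrightarrow> cl b - cl a \<le> b - a" for a b by (auto simp: cl_def)
  have clid: "r \<in> {0..\<tau>} \<Longrightarrow> cl r = r" for r by (auto simp: cl_def)
  have lin: "linear proj" using bounded_linear.linear[OF pl] .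
  define F where "F c r = proj (Q 0 (cl r)) $ c" for c r
  have FQ: "F c b - F c a = proj (Q (cl a) (cl b)) $ c" if "a \<le> b" for a b c
  proof -
    have QQ: "Q 0 (cl b) - Q 0 (cl a) = Q (cl a) (cl b)" by (rule Q_add) (use cl clm[OF that] in auto)
    have "proj (Q 0 (cl b)) - proj (Q 0 (cl a)) = proj (Q (cl a) (cl b))"
      using arg_cong[of _ _ proj, OF QQ] linear_diff[OF lin, of "Q 0 (cl b)" "Q 0 (cl a)"] by simp
    then have "proj (Q 0 (cl b)) $ c - proj (Q 0 (cl a)) $ c = proj (Q (cl a) (cl b)) $ c"
      by (simp flip: vector_minus_component)
    then show ?thesis unfolding F_def .
  qed
  have Fmono: "F c a \<le> F c b" if "a \<le> b" for a b c
    using FQ[OF that, of c] comp_bounds(1)[OF pl pin cl(1) clm[OF that] cl(2), where c=c] by simp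
  have Flip: "F c b - F c a \<le> b - a" if "a \<le> b" for a b c
    using FQ[OF that, of c] comp_bounds(2)[OF pl pin cl(1) clm[OF that] cl(2), where c=c] cll[OF that] by simp
  have "\<forall>c. \<exists>f. (\<forall>x. 0 \<le> f x) \<and> f \<in> borel_measurable borel \<and>
     (\<forall>a b. a \<le> b \<longrightarrow> (f has_integral (F c b - F c a)) {a..b}) \<and>
     (\<forall>W. open W \<longrightarrow> (\<forall>a b. a \<le> b \<longrightarrow> {a..b} \<subseteq> W \<longrightarrow> F c a = F c b) \<longrightarrow> negligible {x\<in>W. f x \<noteq> 0})"
  proof
    fix c
    show "\<exists>f. (\<forall>x. 0 \<le> f x) \<and> f \<in> borel_measurable borel \<and>
     (\<forall>a b. a \<le> b \<longrightarrow> (f has_integral (F c b - F c a)) {a..b}) \<and>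
     (\<forall>W. open W \<longrightarrow> (\<forall>a b. a \<le> b \<longrightarrow> {a..b} \<subseteq> W \<longrightarrow> F c a = F c b) \<longrightarrow> negligible {x\<in>W. f x \<noteq> 0})"
      by (rule lip_density) (rule Fmono, assumption, rule Flip, assumption)
  qed
  then obtain fc0 where fc0: "\<forall>c. (\<forall>x. 0 \<le> fc0 c x) \<and> fc0 c \<in> borel_measurable borel \<and>
     (\<forall>a b. a \<le> b \<longrightarrow> (fc0 c has_integral (F c b - F c a)) {a..b}) \<and>
     (\<forall>W. open W \<longrightarrow> (\<forall>a b. a \<le> b \<longrightarrow> {a..b} \<subseteq> W \<longrightarrow> F c a = F c b) \<longrightarrow> negligible {x\<in>W. fc0 c x \<noteq> 0})"
    by (rule choice[THEN exE])
  obtain fc where fc: "\<And>c x. 0 \<le> fc c x" "\<And>c. fc c \<in> borel_measurable borel"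
     "\<And>c a b. a \<le> b \<Longrightarrow> (fc c has_integral (F c b - F c a)) {a..b}"
     "\<And>c W. open W \<Longrightarrow> (\<forall>a b. a \<le> b \<longrightarrow> {a..b} \<subseteq> W \<longrightarrow> F c a = F c b) \<Longrightarrow> negligible {x\<in>W. fc c x \<noteq> 0}"
  proof
    show "\<And>c x. 0 \<le> fc0 c x" using fc0 by blast
    show "\<And>c. fc0 c \<in> borel_measurable borel" using fc0 by blast
    show "\<And>c a b. a \<le> b \<Longrightarrow> (fc0 c has_integral (F c b - F c a)) {a..b}" using fc0 by blast
    show "\<And>c W. open W \<Longrightarrow> (\<forall>a b. a \<le> b \<longrightarrow> {a..b} \<subseteq> W \<longrightarrow> F c a = F c b) \<Longrightarrow> negligible {x\<in>W. fc0 c x \<noteq> 0}"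
      using fc0 by blast
  qed
  define pd where "pd r = (\<chi> c. fc c r)" for r
  have F0: "F c 0 = 0" for c
    by (simp add: F_def cl_def Q_00 linear_0[OF lin] tau less_imp_le)
  have Fr: "F c r = proj (Q 0 r) $ c" if "r \<in> {0..\<tau>}" for c r
    using clid[OF that] by (simp add: F_def)
  have pdc: "pd x \<bullet> b = fc (axis_index b) x" if "b \<in> Basis" for x b
    by (subst axis_index[OF that]) (simp add: pd_def inner_axis)
  have hi: "(pd has_integral proj (Q 0 r)) {0..r}" if r: "r \<in> {0..\<tau>}" for r
  proof (rule has_integral_componentwise)
    fix b :: "real^'c" assume b: "b \<in> Basis"
    have "(fc (axis_index b) has_integral proj (Q 0 r) $ (axis_index b)) {0..r}"
      using fc(3)[of 0 r "axis_index b"] r F0 Fr[OF r] by simp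
    moreover have "proj (Q 0 r) \<bullet> b = proj (Q 0 r) $ (axis_index b)"
      by (subst axis_index[OF b]) (simp add: inner_axis)
    ultimately show "((\<lambda>x. pd x \<bullet> b) has_integral proj (Q 0 r) \<bullet> b) {0..r}"
      using pdc[OF b] by simp
  qed
  have ai: "pd absolutely_integrable_on {0..\<tau>}"
  proof (rule absolutely_integrable_componentwise)
    fix b :: "real^'c" assume b: "b \<in> Basis"
    have "fc (axis_index b) integrable_on {0..\<tau>}"
      using fc(3)[of 0 \<tau>] tau by (auto intro: has_integral_integrable)
    then have "fc (axis_index b) absolutely_integrable_on {0..\<tau>}"
      by (rule nonnegative_absolutely_integrable_1) (use fc(1) in auto)
    then show "(\<lambda>x. pd x \<bullet> b) absolutely_integrable_on {0..\<tau>}" using pdc[OF b] by simp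
  qed
  define N0 where "N0 = {x\<in>{0..\<tau>}. (\<Sum>c\<in>UNIV. fc c x) \<noteq> 1}"
  have nN0: "negligible N0"
    unfolding N0_def
  proof (rule ae_eq_by_tails[where J="\<lambda>a. \<tau> - a"])
    show "(\<lambda>x. \<Sum>c\<in>UNIV. fc c x) \<in> borel_measurable borel" using fc(2) by simp
    show "(\<lambda>x. 1::real) \<in> borel_measurable borel" by simp
    show "0 \<le> (\<Sum>c\<in>UNIV. fc c x)" for x using fc(1) by (simp add: sum_nonneg)
    show "0 \<le> \<tau>" using tau by simp
    fix a assume a: "0 \<le> a" "a \<le> \<tau>"
    have "((\<lambda>x. \<Sum>c\<in>UNIV. fc c x) has_integral (\<Sum>c\<in>UNIV. F c \<tau> - F c a)) {a..\<tau>}"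
      by (rule has_integral_sum) (use fc(3) a in auto)
    moreover have "(\<Sum>c\<in>UNIV. F c \<tau> - F c a) = \<tau> - a"
    proof -
      have "(\<Sum>c\<in>UNIV. F c \<tau> - F c a) = (\<Sum>c\<in>UNIV. proj (Q (cl a) (cl \<tau>)) $ c)"
        using FQ[OF a(2)] by simp
      also have "\<dots> = cl \<tau> - cl a" by (rule comp_bounds(3)[OF pl pin cl(1) clm[OF a(2)] cl(2)])
      also have "\<dots> = \<tau> - a" using a tau by (simp add: cl_def)
      finally show ?thesis .
    qed
    ultimately show "((\<lambda>x. \<Sum>c\<in>UNIV. fc c x) has_integral (\<tau> - a)) {a..\<tau>}" by simp
    show "((\<lambda>x. 1::real) has_integral (\<tau> - a)) {a..\<tau>}"
      using has_integral_const_real[of "1::real" a \<tau>] a by simp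
  qed (simp)
  define W where "W c = {r \<in> {0<..<\<tau>}. \<exists>c'. vv (Z r) $ c < vv (Z r) $ c'}" for c
  have Wopen: "open (W c)" for c
  proof -
    have vZ: "continuous_on {0<..<\<tau>} (\<lambda>r. vv (Z r))"
      by (rule bounded_linear.continuous_on[OF vl]) (rule continuous_on_subset[OF Zc], auto)
    have G: "open {v::real^'c. \<exists>c'. v $ c < v $ c'}"
    proof -
      have "{v::real^'c. \<exists>c'. v $ c < v $ c'} = (\<Union>c'. {v. v $ c < v $ c'})" by auto
      moreover have "open {v::real^'c. v $ c < v $ c'}" for c'
        by (intro open_Collect_less continuous_intros)
      ultimately show ?thesis by auto
    qed
    have "open ((\<lambda>r. vv (Z r)) -` {v::real^'c. \<exists>c'. v $ c < v $ c'} \<inter> {0<..<\<tau>})"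
      using vZ G continuous_on_open_vimage[of "{0<..<\<tau>}" "\<lambda>r. vv (Z r)"] by auto
    moreover have "(\<lambda>r. vv (Z r)) -` {v::real^'c. \<exists>c'. v $ c < v $ c'} \<inter> {0<..<\<tau>} = W c"
      by (auto simp: W_def)
    ultimately show ?thesis by simp
  qed
  have Wconst: "F c a = F c b" if ab: "a \<le> b" "{a..b} \<subseteq> W c" for a b c
  proof -
    have a0: "0 < a" "b < \<tau>" using ab by (auto simp: W_def)
    have "F c b - F c a = proj (Q a b) $ c"
      using FQ[OF ab(1), of c] clid[of a] clid[of b] a0 ab(1) by simp
    also have "\<dots> = 0"
    proof (rule key_claim[OF pl vl pin eps])
      show "0 \<le> a" "a \<le> b" "b \<le> \<tau>" using a0 ab by auto
      fix r assume "r \<in> {a..b}"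
      then show "\<exists>c'. vv (Z r) $ c < vv (Z r) $ c'" using ab(2) by (auto simp: W_def)
    qed
    finally show ?thesis by simp
  qed
  have nN1: "negligible {x\<in>W c. fc c x \<noteq> 0}" for c
    by (rule fc(4)[OF Wopen]) (use Wconst in blast)
  define N where "N = {0, \<tau>} \<union> N0 \<union> \<Union> (range (\<lambda>c. {x\<in>W c. fc c x \<noteq> 0}))"
  have nN: "negligible N"
    unfolding N_def
    by (intro negligible_Un nN0 negligible_Union) (auto intro: nN1)
  have br: "pd r \<in> best_resp (vv (Z r))" if r: "r \<in> {0..\<tau>} - N" for r
  proof (rule br_of_support)
    have r': "0 < r" "r < \<tau>" "(\<Sum>c\<in>UNIV. fc c r) = 1" using r by (auto simp: N_def N0_def)
    show "pd r \<in> mixed_strats" using r'(3) fc(1) by (simp add: mixed_strats_def pd_def)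
    fix c c' assume "pd r $ c \<noteq> 0"
    then have "fc c r \<noteq> 0" by (simp add: pd_def)
    then have "r \<notin> W c" using r by (auto simp: N_def)
    then show "vv (Z r) $ c' \<le> vv (Z r) $ c" using r' by (auto simp: W_def not_less)
  qed
  show ?thesis using nN ai hi br by blast
qed

end


lemma bl_inl: "bounded_linear (\<lambda>x::'u::real_normed_vector. (x, 0::'v::real_normed_vector))"
  by (intro bounded_linear_Pair bounded_linear_ident bounded_linear_zero)

lemma bl_inr: "bounded_linear (\<lambda>x::'v::real_normed_vector. (0::'u::real_normed_vector, x))"
  by (intro bounded_linear_Pair bounded_linear_ident bounded_linear_zero)

context lim_setup begin

lemma limit_solution: "incl_solution (br_field A B) Z \<tau>"
proof -
  have vl1: "bounded_linear (\<lambda>z :: (real^'a) \<times> (real^'b). payvec1 A (snd z))"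
    using bounded_linear_compose[OF payvec1_linear[of A] bounded_linear_snd] by (simp add: o_def)
  have vl2: "bounded_linear (\<lambda>z :: (real^'a) \<times> (real^'b). payvec2 B (fst z))"
    using bounded_linear_compose[OF payvec2_linear[of B] bounded_linear_fst] by (simp add: o_def)
  have pin1: "fst (xi t) \<in> mixed_strats" for t using xi_in[of t] by (auto simp: XX_def mem_Times_iff)
  have pin2: "snd (xi t) \<in> mixed_strats" for t using xi_in[of t] by (auto simp: XX_def mem_Times_iff)
  obtain C1 where C1: "\<And>t p. p \<in> mixed_strats \<Longrightarrow>
      payvec1 A (snd (UU t)) \<bullet> p - payvec1 A (snd (UU t)) \<bullet> fst (xi t) \<le> C1 * exp (- t)"
    using eps_br1 by blast
  obtain C2 where C2: "\<And>t p. p \<in> mixed_strats \<Longrightarrow>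
      payvec2 B (fst (UU t)) \<bullet> p - payvec2 B (fst (UU t)) \<bullet> snd (xi t) \<le> C2 * exp (- t)"
    using eps_br2 by blast
  obtain pd1 N1 where P1: "negligible N1" "pd1 absolutely_integrable_on {0..\<tau>}"
      "\<And>r. r \<in> {0..\<tau>} \<Longrightarrow> (pd1 has_integral fst (Q 0 r)) {0..r}"
      "\<And>r. r \<in> {0..\<tau>} - N1 \<Longrightarrow> pd1 r \<in> best_resp (payvec1 A (snd (Z r)))"
    using player_density[OF bounded_linear_fst vl1 pin1 C1] by blast
  obtain pd2 N2 where P2: "negligible N2" "pd2 absolutely_integrable_on {0..\<tau>}"
      "\<And>r. r \<in> {0..\<tau>} \<Longrightarrow> (pd2 has_integral snd (Q 0 r)) {0..r}"
      "\<And>r. r \<in> {0..\<tau>} - N2 \<Longrightarrow> pd2 r \<in> best_resp (payvec2 B (fst (Z r)))"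
    using player_density[OF bounded_linear_snd vl2 pin2 C2] by blast
  define w where "w r = (pd1 r, pd2 r) - Z r" for r
  have pair_eq: "(\<lambda>r. (pd1 r, pd2 r)) = (\<lambda>r. ((\<lambda>x. (x, 0)) \<circ> pd1) r + ((\<lambda>x. (0, x)) \<circ> pd2) r)"
    by (auto simp: o_def)
  have wai: "w absolutely_integrable_on {0..\<tau>}"
  proof -
    have a1: "(\<lambda>x. (x, 0::real^'b)) \<circ> pd1 absolutely_integrable_on {0..\<tau>}"
      by (rule absolutely_integrable_linear[OF P1(2) bl_inl])
    have a2: "(\<lambda>x. (0::real^'a, x)) \<circ> pd2 absolutely_integrable_on {0..\<tau>}"
      by (rule absolutely_integrable_linear[OF P2(2) bl_inr])
    have a3: "Z absolutely_integrable_on {0..\<tau>}" by (rule absolutely_integrable_continuous_real[OF Zc])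
    have "(\<lambda>r. ((\<lambda>x. (x, 0::real^'b)) \<circ> pd1) r + ((\<lambda>x. (0::real^'a, x)) \<circ> pd2) r - Z r) absolutely_integrable_on {0..\<tau>}"
      by (intro set_integral_diff(1) set_integral_add(1) a1 a2 a3)
    then show ?thesis unfolding w_def by (simp add: o_def)
  qed
  have whi: "(w has_integral (Z r - Z 0)) {0..r}" if r: "r \<in> {0..\<tau>}" for r
  proof -
    have h1: "((\<lambda>x. (x, 0::real^'b)) \<circ> pd1 has_integral (fst (Q 0 r), 0)) {0..r}"
      using has_integral_linear[OF P1(3)[OF r] bl_inl] .
    have h2: "((\<lambda>x. (0::real^'a, x)) \<circ> pd2 has_integral (0, snd (Q 0 r))) {0..r}"
      using has_integral_linear[OF P2(3)[OF r] bl_inr] .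
    have h3: "(Z has_integral integral {0..r} Z) {0..r}"
      by (rule integrable_integral[OF Z_int]) (use r in auto)
    have "((\<lambda>r. ((\<lambda>x. (x, 0::real^'b)) \<circ> pd1) r + ((\<lambda>x. (0::real^'a, x)) \<circ> pd2) r - Z r) has_integral
            ((fst (Q 0 r), 0) + (0, snd (Q 0 r)) - integral {0..r} Z)) {0..r}"
      by (intro has_integral_diff has_integral_add h1 h2 h3)
    moreover have "(fst (Q 0 r), 0) + (0, snd (Q 0 r)) - integral {0..r} Z = Z r - Z 0"
      by (simp add: Q_def prod_eq_iff)
    ultimately show ?thesis unfolding w_def by (simp add: o_def)
  qed
  have wbr: "w r \<in> br_field A B (Z r)" if r: "r \<in> {0..\<tau>} - (N1 \<union> N2)" for r
  proof -
    have "pd1 r \<in> best_resp (payvec1 A (snd (Z r)))" "pd2 r \<in> best_resp (payvec2 B (fst (Z r)))"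
      using P1(4)[of r] P2(4)[of r] r by auto
    moreover have "(pd1 r, pd2 r) - Z r = (pd1 r - fst (Z r), pd2 r - snd (Z r))"
      by (simp add: prod_eq_iff)
    ultimately show ?thesis unfolding br_field_def w_def by blast
  qed
  show ?thesis
    unfolding incl_solution_def
    using tau wai whi wbr negligible_Un[OF P1(1) P2(1)] by (intro conjI exI[of _ w] exI[of _ "N1 \<union> N2"]) auto
qed

end


lemma incl_mono:
  assumes "incl_solution F z t" "0 \<le> t'" "t' \<le> t"
  shows "incl_solution F z t'"
proof -
  obtain w N where w: "w absolutely_integrable_on {0..t}"
    "\<forall>s\<in>{0..t}. (w has_integral (z s - z 0)) {0..s}" "negligible N" "\<forall>s\<in>{0..t} - N. w s \<in> F (z s)"
    using assms(1) unfolding incl_solution_def by blast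
  have "w absolutely_integrable_on {0..t'}"
    by (rule absolutely_integrable_on_subinterval[OF w(1)]) (use assms in auto)
  moreover have "\<forall>s\<in>{0..t'}. (w has_integral (z s - z 0)) {0..s}" using w(2) assms by auto
  moreover have "\<forall>s\<in>{0..t'} - N. w s \<in> F (z s)" using w(4) assms by auto
  ultimately show ?thesis unfolding incl_solution_def using assms(2) w(3) by blast
qed

context game begin

lemma approx_claim:
  assumes d: "\<delta> > 0" and T: "T > 0"
  shows "\<exists>S. \<forall>s\<ge>S. \<exists>Zs. incl_solution (br_field A B) Zs (2*T) \<and> Zs ` {0..2*T} \<subseteq> LL \<and>
                (\<forall>r\<in>{0..2*T}. norm (UU (s + r) - Zs r) \<le> \<delta>)"
proof (rule ccontr)
  define P where "P s = (\<exists>Zs. incl_solution (br_field A B) Zs (2*T) \<and> Zs ` {0..2*T} \<subseteq> LL \<and>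
                (\<forall>r\<in>{0..2*T}. norm (UU (s + r) - Zs r) \<le> \<delta>))" for s
  assume "\<not> (\<exists>S. \<forall>s\<ge>S. P s)"
  then have "\<forall>n::nat. \<exists>s. s \<ge> real n \<and> \<not> P s" unfolding P_def by (meson not_le_imp_less)
  then obtain sq where sq: "\<forall>n. sq n \<ge> real n \<and> \<not> P (sq n)" by (rule choice[THEN exE])
  define FF where "FF n x = UU (sq n + x)" for n x
  obtain g k where g: "continuous_on {0..2*T} g" "strict_mono (k :: nat \<Rightarrow> nat)"
    "\<And>e. 0 < e \<Longrightarrow> \<exists>N. \<forall>n x. n \<ge> N \<and> x \<in> {0..2*T} \<longrightarrow> norm (FF (k n) x - g x) < e"
  proof (rule Arzela_Ascoli[of "{0..2*T}" FF 2])
    show "compact {0..2*T}" by simp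
    show "\<And>n x. x \<in> {0..2*T} \<Longrightarrow> norm (FF n x) \<le> 2" unfolding FF_def using XX_norm UU_in by blast
    fix x e assume "x \<in> {0..2*T}" "0 < (e::real)"
    show "\<exists>d>0. \<forall>n y. y \<in> {0..2*T} \<and> norm (x - y) < d \<longrightarrow> norm (FF n x - FF n y) < e"
    proof (intro exI[of _ "e/4"] conjI allI impI)
      show "0 < e/4" using \<open>0 < e\<close> by simp
      fix n y assume "y \<in> {0..2*T} \<and> norm (x - y) < e/4"
      then have a: "\<bar>x - y\<bar> < e/4" by (simp add: dist_real_def)
      have "norm (FF n x - FF n y) \<le> 4 * \<bar>(sq n + x) - (sq n + y)\<bar>"
        unfolding FF_def using UU_lip[of "sq n + x" "sq n + y"] by (simp add: abs_minus_commute)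
      also have "\<bar>(sq n + x) - (sq n + y)\<bar> = \<bar>x - y\<bar>" by simp
      finally have "norm (FF n x - FF n y) \<le> 4 * \<bar>x - y\<bar>" .
      moreover have "4 * \<bar>x - y\<bar> < e" using a by simp
      ultimately show "norm (FF n x - FF n y) < e" by (rule le_less_trans)
    qed
  qed blast
  define s' where "s' n = sq (k n)" for n
  have s'_top: "filterlim s' at_top sequentially"
  proof (rule filterlim_at_top_mono[OF filterlim_real_sequentially])
    show "eventually (\<lambda>n. real n \<le> s' n) sequentially"
    proof (rule always_eventually, rule allI)
      fix n
      have "real n \<le> real (k n)" using seq_suble[OF g(2)] by simp
      also have "\<dots> \<le> s' n" using sq by (simp add: s'_def)
      finally show "real n \<le> s' n" .
    qed
  qed
  have ls: "lim_setup A B h1 h2 y s' (2*T) g"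
  proof (intro lim_setup.intro game_axioms lim_setup_axioms.intro)
    show "filterlim s' at_top sequentially" by (rule s'_top)
    show "0 < 2*T" using T by simp
    show "continuous_on {0..2*T} g" by (rule g(1))
    fix e :: real assume "e > 0"
    then obtain N where "\<forall>n x. n \<ge> N \<and> x \<in> {0..2*T} \<longrightarrow> norm (FF (k n) x - g x) < e" using g(3) by blast
    then have "\<forall>n\<ge>N. \<forall>r\<in>{0..2*T}. norm (UU (s' n + r) - g r) < e"
      by (auto simp: FF_def s'_def)
    then show "\<exists>N. \<forall>n\<ge>N. \<forall>r\<in>{0..2*T}. norm (UU (s' n + r) - g r) < e" by blast
  qed
  interpret L: lim_setup A B h1 h2 y s' "2*T" g by (rule ls)
  have sol: "incl_solution (br_field A B) g (2*T)" by (rule L.limit_solution)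
  have img: "g ` {0..2*T} \<subseteq> LL"
  proof
    fix z assume "z \<in> g ` {0..2*T}"
    then obtain r where r: "r \<in> {0..2*T}" "z = g r" by blast
    show "z \<in> LL" using LL_lim[OF s'_top L.UU_ptwise[OF r(1)]] r(2) by simp
  qed
  obtain N where N: "\<forall>n x. n \<ge> N \<and> x \<in> {0..2*T} \<longrightarrow> norm (FF (k n) x - g x) < \<delta>" using g(3) d by blast
  have "P (sq (k N))"
    unfolding P_def
  proof (intro exI[of _ g] conjI sol img ballI)
    fix r assume "r \<in> {0..2*T}"
    then show "norm (UU (sq (k N) + r) - g r) \<le> \<delta>" using N by (auto simp: FF_def less_imp_le)
  qed
  then show False using sq by blast
qed

end


context game begin

lemma LL_ict: "internally_chain_transitive (br_field A B) LL"
  unfolding internally_chain_transitive_def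
proof (intro conjI LL_compact ballI allI impI)
  fix p q assume p: "p \<in> LL" and q: "q \<in> LL"
  fix \<epsilon> T :: real assume e: "\<epsilon> > 0" and T: "T > 0"
  define \<delta> where "\<delta> = \<epsilon> / 2"
  have d: "\<delta> > 0" using e by (simp add: \<delta>_def)
  define P where "P s Zs = (incl_solution (br_field A B) Zs (2*T) \<and> Zs ` {0..2*T} \<subseteq> LL \<and>
                (\<forall>r\<in>{0..2*T}. norm (UU (s + r) - Zs r) \<le> \<delta>))" for s Zs
  obtain S where S: "\<And>s. s \<ge> S \<Longrightarrow> \<exists>Zs. P s Zs"
    using approx_claim[OF d T] unfolding P_def by blast
  obtain a where a: "a \<ge> S" "dist (UU a) p < \<epsilon>/2" using LL_approx_UU[OF p, of "\<epsilon>/2" S] e by auto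
  obtain b where b: "b \<ge> a + T" "dist (UU b) q < \<epsilon>/2" using LL_approx_UU[OF q, of "\<epsilon>/2" "a + T"] e by auto
  define N where "N = nat \<lfloor>(b - a) / T\<rfloor>"
  have ba: "(b - a) / T \<ge> 1" using b(1) T by (simp add: field_simps)
  have N1: "N \<ge> 1" using ba unfolding N_def by linarith
  have Nle: "real N \<le> (b - a) / T" unfolding N_def using ba by linarith
  have Ngt: "(b - a) / T < real N + 1" unfolding N_def using ba by linarith
  define t0 where "t0 = (b - a) / real N"
  have Npos: "real N > 0" using N1 by simp
  have t0T: "T \<le> t0" using Nle Npos T unfolding t0_def by (simp add: field_simps)
  have t02: "t0 \<le> 2 * T"
  proof -
    have "b - a < (real N + 1) * T" using Ngt T by (simp add: field_simps)
    also have "\<dots> \<le> 2 * T * real N" using N1 T by (simp add: field_simps)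
    finally show ?thesis using Npos unfolding t0_def by (simp add: field_simps)
  qed
  have t0pos: "t0 > 0" using t0T T by simp
  define \<sigma> where "\<sigma> i = a + (real i - 1) * t0" for i :: nat
  have \<sigma>S: "\<sigma> i \<ge> S" if "i \<ge> 1" for i
  proof -
    have "0 \<le> (real i - 1) * t0" using that t0pos by simp
    then show ?thesis using a(1) unfolding \<sigma>_def by linarith
  qed
  define zs where "zs i = (SOME Zs. P (\<sigma> i) Zs)" for i
  have zsP: "P (\<sigma> i) (zs i)" if "i \<ge> 1" for i
    unfolding zs_def by (rule someI_ex[OF S[OF \<sigma>S[OF that]]])
  have zsol: "incl_solution (br_field A B) (zs i) (2*T)" "zs i ` {0..2*T} \<subseteq> LL"
    "\<And>r. r \<in> {0..2*T} \<Longrightarrow> norm (UU (\<sigma> i + r) - zs i r) \<le> \<delta>" if "i \<ge> 1" for i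
    using zsP[OF that] unfolding P_def by auto
  have t0in: "t0 \<in> {0..2*T}" "(0::real) \<in> {0..2*T}" using t0pos t02 T by auto
  have \<sigma>Suc: "\<sigma> (Suc i) = \<sigma> i + t0" for i unfolding \<sigma>_def by (simp add: algebra_simps)
  have \<sigma>1: "\<sigma> 1 = a" by (simp add: \<sigma>_def)
  have \<sigma>N: "\<sigma> N + t0 = b"
  proof -
    have "\<sigma> N + t0 = a + real N * t0" unfolding \<sigma>_def by (simp add: algebra_simps)
    also have "real N * t0 = b - a" unfolding t0_def using Npos by simp
    finally show ?thesis by simp
  qed
  show "\<exists>n\<ge>1. \<exists>zs ts. (\<forall>i\<in>{1..n}. incl_solution (br_field A B) (zs i) (ts i) \<and> T \<le> ts i \<and> zs i ` {0..ts i} \<subseteq> LL) \<and>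
        (\<forall>i\<in>{1..<n}. norm (zs i (ts i) - zs (Suc i) 0) \<le> \<epsilon>) \<and>
        norm (zs 1 0 - p) \<le> \<epsilon> \<and> norm (zs n (ts n) - q) \<le> \<epsilon>"
  proof (intro exI[of _ N] conjI exI[of _ zs] exI[of _ "\<lambda>_. t0"] N1 ballI)
    fix i assume i: "i \<in> {1..N}"
    then have i1: "i \<ge> 1" by simp
    show "incl_solution (br_field A B) (zs i) t0"
      by (rule incl_mono[OF zsol(1)[OF i1]]) (use t0pos t02 in auto)
    show "T \<le> t0" by (rule t0T)
    have "zs i ` {0..t0} \<subseteq> zs i ` {0..2*T}" using t02 by auto
    then show "zs i ` {0..t0} \<subseteq> LL" using zsol(2)[OF i1] by blast
  next
    fix i assume i: "i \<in> {1..<N}"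
    then have i1: "i \<ge> 1" "Suc i \<ge> 1" by auto
    have "norm (zs i t0 - zs (Suc i) 0) \<le> norm (zs i t0 - UU (\<sigma> i + t0)) + norm (UU (\<sigma> (Suc i) + 0) - zs (Suc i) 0)"
      using norm_triangle_ineq[of "zs i t0 - UU (\<sigma> i + t0)" "UU (\<sigma> (Suc i) + 0) - zs (Suc i) 0"]
      by (simp add: \<sigma>Suc)
    also have "\<dots> \<le> \<delta> + \<delta>"
      using zsol(3)[OF i1(1) t0in(1)] zsol(3)[OF i1(2) t0in(2)] by (simp add: norm_minus_commute)
    finally show "norm (zs i t0 - zs (Suc i) 0) \<le> \<epsilon>" by (simp add: \<delta>_def)
  next
    have "norm (zs 1 0 - p) \<le> norm (zs 1 0 - UU a) + norm (UU a - p)"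
      using norm_triangle_ineq[of "zs 1 0 - UU a" "UU a - p"] by simp
    also have "\<dots> \<le> \<delta> + \<epsilon>/2"
    proof -
      have "norm (UU (\<sigma> 1 + 0) - zs 1 0) \<le> \<delta>" using zsol(3)[of 1 0] t0in(2) by simp
      then have "norm (zs 1 0 - UU a) \<le> \<delta>" using \<sigma>1 by (simp add: norm_minus_commute)
      then show ?thesis using a(2) by (simp add: dist_norm)
    qed
    finally show "norm (zs 1 0 - p) \<le> \<epsilon>" by (simp add: \<delta>_def)
  next
    have "norm (zs N t0 - q) \<le> norm (zs N t0 - UU (\<sigma> N + t0)) + norm (UU b - q)"
      using norm_triangle_ineq[of "zs N t0 - UU (\<sigma> N + t0)" "UU b - q"] by (simp add: \<sigma>N)
    also have "\<dots> \<le> \<delta> + \<epsilon>/2"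
      using zsol(3)[OF N1 t0in(1)] b(2) by (simp add: norm_minus_commute dist_norm)
    finally show "norm (zs N t0 - q) \<le> \<epsilon>" by (simp add: \<delta>_def)
  qed
qed

end

theorem theorem6p3:
  fixes A B :: "'a::finite \<Rightarrow> 'b::finite \<Rightarrow> real"
    and h1 :: "real^'a \<Rightarrow> real" and h2 :: "real^'b \<Rightarrow> real"
    and y :: "real \<Rightarrow> (real^'a) \<times> (real^'b)"
  assumes h1: "penalty h1" and h2: "penalty h2"
    and ode: "\<forall>t\<ge>0. (y has_vector_derivative
               (payvec1 A (choice h2 (snd (y t))), payvec2 B (choice h1 (fst (y t)))))
               (at t within {0..})"
  shows "internally_chain_transitive (br_field A B)
           (omega_limit (\<lambda>t. (1 / t) *\<^sub>R
              integral {0..t} (\<lambda>s. (choice h1 (fst (y s)), choice h2 (snd (y s))))))"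
proof -
  interpret G: game A B h1 h2 y by (rule game.intro[OF h1 h2 ode])
  have "(\<lambda>t. (1 / t) *\<^sub>R integral {0..t} (\<lambda>s. (choice h1 (fst (y s)), choice h2 (snd (y s))))) = G.u"
    by (rule ext) (simp add: G.u_def G.xx_def[abs_def])
  then show ?thesis using G.LL_ict by simp
qed


end
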